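(* Consider a single seller with one item and a single buyer ($n=1$), with the buyer's value drawn from an arbitrary distribution $F$ satisfying the standing assumptions. Then every point $(\Pi,U)$ on the Pareto frontier can be realized by a mechanism that fixes a probability $\lambda\in[0,1]$ ex ante, posts a take-it-or-leave-it price $p^\dagger$ with probability $\lambda$ and a take-it-or-leave-it price $p^\ddagger$ with probability $1-\lambda$, where both $p^\dagger$ and $p^\ddagger$ are at most the lowest monopoly reserve of $F$ (if the buyer accepts, she gets the item and pays the posted price to the seller).
   Context: Setting: one seller with a single item of zero cost and $n\ge 1$ buyers with quasi-linear utilities ($x\cdot v-p$ for allocation $x\in[0,1]$ and payment $p$); the buyers' values $v_1,\dots,v_n$ are i.i.d. from a publicly known distribution $F$ whose support is $[v_L,v_H]$ or $[v_L,\infty)$ with $v_L\ge 0$, which has no atoms except possibly at $v_H$, whose CDF $F(t)=\Pr[v<t]$ is differentiable on the interior of the support with density $f$, and such that some price $p$ in the support maximizes $p(1-F(p))$. $\mathfrak M$ is the set of direct mechanisms (allocation rules $x_i(\mathbf v)\in[0,1]$, payments $p_i(\mathbf v)\ge 0$, all payments transferred to the seller) that are ex-post feasible ($\sum_i x_i\le 1$), Bayesian incentive compatible, interim individually rational, and symmetric across buyers. For $M\in\mathfrak M$: seller revenue $\Pi_F(M)=\mathbb E[\sum_i p_i(\mathbf v)]$, buyer $i$'s ex-ante utility $U_{i,F}(M)=\mathbb E[x_i(\mathbf v)v_i-p_i(\mathbf v)]$, buyers' surplus $U_F(M)=\sum_i U_{i,F}(M)$. $M$ is Pareto-dominated by $M'$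 if $\Pi_F(M')\ge \Pi_F(M)$ and $U_F(M')\ge U_F(M)$ with at least one strict; $M$ is Pareto-optimal if no $M'\in\mathfrak M$ Pareto-dominates it, and then $(\Pi_F(M),U_F(M))$ is on the Pareto frontier. Quantile of value $v$ is $q=1-F(v)$; value function $v(q)=\inf\{v:F(v)>1-q\}$; revenue curve $R(q)=q\,v(q)$; $q_m=\sup\arg\max_q R(q)$ and the lowest monopoly reserve is $v(q_m)$. *)

theory Defs
  imports "HOL-Probability.Probability"
begin

text \<open>Single buyer (n = 1). The value distribution is a probability measure D on the
reals (Borel sets). A direct mechanism is a pair (x, p) of allocation and payment rules.\<close>

definition supp :: "real measure \<Rightarrow> real set" where
  "supp D = {v. \<forall>e>0. measure D (ball v e) > 0}"

definition cdf_lt :: "real measure \<Rightarrow> real \<Rightarrow> real" where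
  "cdf_lt D t = measure D {..<t}"

definition standing_assumptions :: "real measure \<Rightarrow> bool" where
  "standing_assumptions D \<longleftrightarrow>
     prob_space D \<and> sets D = sets borel \<and>
     (\<exists>vL\<ge>0.
        (\<exists>vH. vL \<le> vH \<and> supp D = {vL..vH} \<and> (\<forall>v. v \<noteq> vH \<longrightarrow> measure D {v} = 0))
      \<or> (supp D = {vL..} \<and> (\<forall>v. measure D {v} = 0))) \<and>
     (\<forall>t\<in>interior (supp D). cdf_lt D differentiable (at t)) \<and>
     (\<exists>p\<in>supp D. \<forall>p'. p' * (1 - cdf_lt D p') \<le> p * (1 - cdf_lt D p))"

definition value_fn :: "real measure \<Rightarrow> real \<Rightarrow> real" where
  "value_fn D q = Inf {v. cdf_lt D v > 1 - q}"

definition rev_curve :: "real measure \<Rightarrow> real \<Rightarrow> real" where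
  "rev_curve D q = q * value_fn D q"

definition q_m :: "real measure \<Rightarrow> real" where
  "q_m D = Sup {q\<in>{0..1}. \<forall>q'\<in>{0..1}. rev_curve D q' \<le> rev_curve D q}"

definition lowest_monopoly_reserve :: "real measure \<Rightarrow> real" where
  "lowest_monopoly_reserve D = value_fn D (q_m D)"

type_synonym mech = "(real \<Rightarrow> real) \<times> (real \<Rightarrow> real)"

text \<open>The class of mechanisms: feasible, (Bayesian = ex post for n = 1) IC, IR, nonnegative
payments; symmetry is vacuous for a single buyer.\<close>
definition mechs :: "real measure \<Rightarrow> mech set" where
  "mechs D = {(x, p). x \<in> borel_measurable borel \<and> p \<in> borel_measurable borel \<and>
     (\<forall>v\<in>supp D. 0 \<le> x v \<and> x v \<le> 1 \<and> 0 \<le> p v \<and> x v * v - p v \<ge> 0) \<and>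
     (\<forall>v\<in>supp D. \<forall>w\<in>supp D. x v * v - p v \<ge> x w * v - p w)}"

text \<open>Revenue and buyer surplus (both nonnegative; extended reals to allow infinite surplus).\<close>
definition revenue :: "real measure \<Rightarrow> mech \<Rightarrow> ennreal" where
  "revenue D M = (\<integral>\<^sup>+ v. ennreal (snd M v) \<partial>D)"

definition surplus :: "real measure \<Rightarrow> mech \<Rightarrow> ennreal" where
  "surplus D M = (\<integral>\<^sup>+ v. ennreal (fst M v * v - snd M v) \<partial>D)"

definition pareto_dominated :: "real measure \<Rightarrow> mech \<Rightarrow> mech \<Rightarrow> bool" where
  "pareto_dominated D M M' \<longleftrightarrow>
     revenue D M' \<ge> revenue D M \<and> surplus D M' \<ge> surplus D M \<and>
     (revenue D M' > revenue D M \<or> surplus D M' > surplus D M)"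

definition pareto_optimal :: "real measure \<Rightarrow> mech \<Rightarrow> bool" where
  "pareto_optimal D M \<longleftrightarrow> M \<in> mechs D \<and> \<not> (\<exists>M'\<in>mechs D. pareto_dominated D M M')"

definition lottery_pricing :: "real \<Rightarrow> real \<Rightarrow> real \<Rightarrow> mech" where
  "lottery_pricing lam p1 p2 =
     (\<lambda>v. lam * (if p1 \<le> v then 1 else 0) + (1 - lam) * (if p2 \<le> v then 1 else 0),
      \<lambda>v. lam * (if p1 \<le> v then p1 else 0) + (1 - lam) * (if p2 \<le> v then p2 else 0))"

end

theory Submission
  imports Defs
begin

lemma space_D: "sets D = sets borel \<Longrightarrow> space D = UNIV"
  using sets_eq_imp_space_eq by fastforce

lemma ae_supp:
  fixes D :: "real measure"
  assumes P: "prob_space D" and sD: "sets D = sets borel"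
  shows "AE v in D. v \<in> supp D"
proof -
  interpret prob_space D by fact
  define F where "F = {ball v e | v e. e > 0 \<and> emeasure D (ball v e) = 0}"
  have opF: "\<And>B. B \<in> F \<Longrightarrow> open B" unfolding F_def by auto
  obtain F' where F': "F' \<subseteq> F" "countable F'" "\<Union>F' = \<Union>F"
    using Lindelof[OF opF] by blast
  have sub: "UNIV - supp D \<subseteq> \<Union>F"
  proof
    fix v assume "v \<in> UNIV - supp D"
    then obtain e where e: "e > 0" "\<not> measure D (ball v e) > 0" unfolding supp_def by auto
    then have "measure D (ball v e) = 0" using measure_nonneg[of D "ball v e"] by linarith
    then have "emeasure D (ball v e) = 0"
      using emeasure_eq_measure[of "ball v e"] by simp
    then show "v \<in> \<Union>F" unfolding F_def using e by force
  qed
  have "(\<Union>B\<in>F'. B) \<in> null_sets D"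
  proof (rule null_sets_UN')
    show "countable F'" by fact
    fix B assume "B \<in> F'"
    then have "B \<in> F" using F' by auto
    then show "B \<in> null_sets D" unfolding F_def using sD by auto
  qed
  moreover have "{x \<in> space D. \<not> x \<in> supp D} \<subseteq> (\<Union>B\<in>F'. B)"
    using sub F' by auto
  ultimately show ?thesis by (rule AE_I')
qed

lemma sa_supp:
  assumes "standing_assumptions D"
  obtains vL where "0 \<le> vL" "vL \<in> supp D" "supp D \<subseteq> {vL..}"
     "\<And>v. v \<in> supp D \<Longrightarrow> {vL..v} \<subseteq> supp D" "closed (supp D)"
proof -
  from assms obtain vL where vL: "vL \<ge> 0" and
    c: "(\<exists>vH. vL \<le> vH \<and> supp D = {vL..vH}) \<or> supp D = {vL..}"
    unfolding standing_assumptions_def by blast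
  from c have m: "vL \<in> supp D \<and> supp D \<subseteq> {vL..} \<and> (\<forall>v\<in>supp D. {vL..v} \<subseteq> supp D) \<and> closed (supp D)"
  proof
    assume "\<exists>vH. vL \<le> vH \<and> supp D = {vL..vH}"
    then obtain vH where "vL \<le> vH" "supp D = {vL..vH}" by blast
    then show ?thesis by simp
  next
    assume "supp D = {vL..}"
    then show ?thesis by simp
  qed
  show ?thesis using that[of vL] m vL by blast
qed

lemma G_compl:
  fixes D :: "real measure"
  assumes "prob_space D" "sets D = sets borel"
  shows "1 - cdf_lt D t = measure D {t..}"
proof -
  interpret prob_space D by fact
  have sp: "space D = UNIV" using assms(2) by (rule space_D)
  have "prob (space D - {t..}) = 1 - prob {t..}"
    by (rule prob_compl) (simp add: assms(2))
  moreover have "space D - {t..} = {..<t}" using sp by auto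
  ultimately show ?thesis unfolding cdf_lt_def by simp
qed

lemma G_antimono:
  fixes D :: "real measure"
  assumes "prob_space D" "sets D = sets borel" "s \<le> t"
  shows "measure D {t..} \<le> measure D {s..}"
proof -
  interpret prob_space D by fact
  show ?thesis using assms(2,3) by (intro finite_measure_mono) auto
qed

lemma G_tendsto0:
  fixes D :: "real measure"
  assumes "prob_space D" "sets D = sets borel" "q > 0"
  shows "\<exists>t. measure D {t..} < q"
proof -
  interpret prob_space D by fact
  have "(\<lambda>i. measure D {real i..}) \<longlonglongrightarrow> measure D (\<Inter>i. {real i..})"
    by (rule finite_Lim_measure_decseq) (auto simp: assms(2) decseq_def)
  moreover have "(\<Inter>i. {real i..}) = {}"
  proof -
    have "x \<notin> (\<Inter>i. {real i..})" for x :: real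
    proof -
      obtain n where "x < real n" using reals_Archimedean2 by blast
      then show ?thesis by (metis INT_iff UNIV_I atLeast_iff not_le)
    qed
    then show ?thesis by blast
  qed
  ultimately have "(\<lambda>i. measure D {real i..}) \<longlonglongrightarrow> 0" by simp
  then have "eventually (\<lambda>i. measure D {real i..} < q) sequentially"
    using assms(3) by (rule order_tendstoD(2))
  then obtain N where "measure D {real N..} < q" using eventually_sequentially by auto
  then show ?thesis by blast
qed

lemma G_leftcont:
  fixes D :: "real measure" and r q :: real
  assumes "prob_space D" "sets D = sets borel" "\<And>v. v < r \<Longrightarrow> measure D {v..} \<ge> q"
  shows "measure D {r..} \<ge> q"
proof -
  interpret prob_space D by fact
  have "(\<lambda>i. measure D {r - 1 / Suc i..}) \<longlonglongrightarrow> measure D (\<Inter>i. {r - 1 / Suc i..})"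
  proof (rule finite_Lim_measure_decseq)
    show "range (\<lambda>i. {r - 1 / real (Suc i)..}) \<subseteq> sets D" by (auto simp: assms(2))
    show "decseq (\<lambda>i. {r - 1 / real (Suc i)..})"
      unfolding decseq_def
    proof (intro allI impI)
      fix m n :: nat assume "m \<le> n"
      then have "1 / real (Suc n) \<le> 1 / real (Suc m)" by (simp add: frac_le)
      then show "{r - 1 / real (Suc n)..} \<subseteq> {r - 1 / real (Suc m)..}" by auto
    qed
  qed
  moreover have "(\<Inter>i. {r - 1 / Suc i..}) = {r..}"
  proof (intro equalityI subsetI)
    fix x assume x: "x \<in> (\<Inter>i. {r - 1 / Suc i..})"
    show "x \<in> {r..}"
    proof (rule ccontr)
      assume "x \<notin> {r..}"
      then have "r - x > 0" by auto
      from reals_Archimedean[OF this] obtain n where n0: "inverse (real (Suc n)) < r - x" ..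
      then have n: "1 / real (Suc n) < r - x" by (simp add: inverse_eq_divide)
      have "x \<in> {r - 1 / Suc n..}" using x by blast
      then have "x \<ge> r - 1 / Suc n" by simp
      then show False using n by auto
    qed
  next
    fix x assume x: "x \<in> {r..}"
    have "r - 1 / Suc i \<le> x" for i :: nat
    proof -
      have "0 \<le> 1 / real (Suc i)" by simp
      then show ?thesis using x by (simp only: atLeast_iff)
    qed
    then show "x \<in> (\<Inter>i. {r - 1 / Suc i..})" by simp
  qed
  ultimately have lim: "(\<lambda>i. measure D {r - 1 / Suc i..}) \<longlonglongrightarrow> measure D {r..}" by simp
  have "\<forall>i. q \<le> measure D {r - 1 / Suc i..}" using assms(3) by auto
  then show ?thesis using LIMSEQ_le_const[OF lim] by blast
qed

lemma reserve_max:
  fixes D :: "real measure"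
  assumes SA: "standing_assumptions D"
  shows "0 \<le> lowest_monopoly_reserve D \<and>
    (\<forall>t. t * measure D {t..} \<le> lowest_monopoly_reserve D * measure D {lowest_monopoly_reserve D..})"
proof -
  have P: "prob_space D" and sD: "sets D = sets borel" using SA unfolding standing_assumptions_def by auto
  interpret prob_space D by fact
  define G where "G t = measure D {t..}" for t
  define h where "h t = t * G t" for t
  obtain vL where vL: "0 \<le> vL" "vL \<in> supp D" "supp D \<subseteq> {vL..}" using sa_supp[OF SA] by metis
  from SA obtain ps where ps: "\<forall>p'. p' * (1 - cdf_lt D p') \<le> ps * (1 - cdf_lt D ps)"
    unfolding standing_assumptions_def by blast
  have Gc: "1 - cdf_lt D t = G t" for t unfolding G_def by (rule G_compl[OF P sD])
  define Ms where "Ms = h ps"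
  have hle: "h t \<le> Ms" for t using ps Gc unfolding h_def Ms_def by metis
  have G01: "0 \<le> G t" "G t \<le> 1" for t unfolding G_def by auto
  have Ganti: "s \<le> t \<Longrightarrow> G t \<le> G s" for s t unfolding G_def by (rule G_antimono[OF P sD])
  have AE: "AE v in D. v \<in> supp D" by (rule ae_supp[OF P sD])
  have G1: "G t = 1" if "t \<le> 0" for t
  proof -
    have "AE v in D. v \<notin> {..<t}" using AE
    proof (rule AE_mp)
      show "AE v in D. v \<in> supp D \<longrightarrow> v \<notin> {..<t}" using vL that by (intro AE_I2) auto
    qed
    then have "{..<t} \<in> null_sets D" using AE_iff_null_sets[of "{..<t}" D] sD by simp
    then have "measure D {..<t} = 0" by (simp add: measure_def null_setsD1)
    then show ?thesis using Gc[of t] unfolding cdf_lt_def by simp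
  qed
  have Ms0: "Ms \<ge> 0" using hle[of 0] unfolding h_def by simp
  define V where "V q = {v. G v < q}" for q
  have vf: "value_fn D q = Inf (V q)" for q
  proof -
    have "{v. cdf_lt D v > 1 - q} = V q" unfolding V_def using Gc by (auto; smt (verit) Gc)
    then show ?thesis unfolding value_fn_def by simp
  qed
  have Vne: "V q \<noteq> {}" if "q > 0" for q using G_tendsto0[OF P sD that] unfolding V_def G_def by auto
  have Vpos: "v > 0" if "v \<in> V q" "q \<le> 1" for v q
  proof (rule ccontr)
    assume "\<not> v > 0" then have "G v = 1" using G1 by auto
    then show False using that unfolding V_def by auto
  qed
  have bddV: "bdd_below (V q)" if "q \<le> 1" for q
    using Vpos[OF _ that] by (auto intro!: bdd_belowI[of _ 0] less_imp_le)
  have vf_nonneg: "value_fn D q \<ge> 0" if "0 < q" "q \<le> 1" for q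
    unfolding vf
  proof (rule cInf_greatest)
    show "V q \<noteq> {}" using Vne[OF that(1)] .
    fix v assume "v \<in> V q" then show "0 \<le> v" using Vpos[OF _ that(2)] by (simp add: less_imp_le)
  qed
  have G_vf: "G (value_fn D q) \<ge> q" if "0 < q" "q \<le> 1" for q
    unfolding G_def
  proof (rule G_leftcont[OF P sD])
    fix v assume "v < value_fn D q"
    then have "v \<notin> V q" unfolding vf using cInf_lower[OF _ bddV[OF that(2)]] by force
    then show "q \<le> measure D {v..}" unfolding V_def G_def by auto
  qed
  have Rle: "rev_curve D q \<le> Ms" if "0 \<le> q" "q \<le> 1" for q
  proof (cases "q = 0")
    case True then show ?thesis using Ms0 unfolding rev_curve_def by simp
  next
    case False
    then have q: "0 < q" using that by auto
    have "rev_curve D q = q * value_fn D q" unfolding rev_curve_def ..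
    also have "\<dots> \<le> G (value_fn D q) * value_fn D q"
      using G_vf[OF q that(2)] vf_nonneg[OF q that(2)] by (intro mult_right_mono) auto
    also have "\<dots> = h (value_fn D q)" unfolding h_def by simp
    also have "\<dots> \<le> Ms" by (rule hle)
    finally show ?thesis .
  qed
  have Rge: "rev_curve D (G p) \<ge> h p" if "G p > 0" for p
  proof -
    have "value_fn D (G p) \<ge> p"
      unfolding vf
    proof (rule cInf_greatest)
      show "V (G p) \<noteq> {}" using Vne[OF that] .
      fix v assume "v \<in> V (G p)"
      then have "G v < G p" unfolding V_def by auto
      then show "p \<le> v" using Ganti[of v p] by (cases "v \<le> p") auto
    qed
    then show ?thesis unfolding rev_curve_def h_def using that by (simp add: mult.commute mult_left_mono)
  qed
  define Q where "Q = {q\<in>{0..1}. \<forall>q'\<in>{0..1}. rev_curve D q' \<le> rev_curve D q}"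
  have qm: "q_m D = Sup Q" unfolding q_m_def Q_def ..
  obtain q0 where q0: "q0 \<in> {0..1}" "q0 > 0" "rev_curve D q0 \<ge> Ms"
  proof (cases "Ms > 0")
    case True
    then have "G ps > 0" unfolding Ms_def h_def using G01[of ps]
      by (metis less_eq_real_def mult_zero_right)
    then show ?thesis using that[of "G ps"] Rge[of ps] G01[of ps] unfolding Ms_def by auto
  next
    case False
    then have "Ms = 0" using Ms0 by auto
    moreover have "rev_curve D 1 \<ge> 0" unfolding rev_curve_def using vf_nonneg[of 1] by auto
    ultimately show ?thesis using that[of 1] by auto
  qed
  have q0Q: "q0 \<in> Q" unfolding Q_def using q0 Rle by fastforce
  have QR: "rev_curve D q \<ge> Ms" if "q \<in> Q" for q using that q0 unfolding Q_def by fastforce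
  have bddQ: "bdd_above Q" unfolding Q_def by (auto intro!: bdd_aboveI[of _ 1])
  have qm_pos: "q_m D > 0" unfolding qm using cSup_upper[OF q0Q bddQ] q0 by auto
  have qm_le: "q_m D \<le> 1" unfolding qm using q0Q by (intro cSup_least) (auto simp: Q_def)
  define r where "r = lowest_monopoly_reserve D"
  have r_def': "r = value_fn D (q_m D)" unfolding r_def lowest_monopoly_reserve_def ..
  have r0: "r \<ge> 0" unfolding r_def' using vf_nonneg[OF qm_pos qm_le] .
  have Gr: "G r \<ge> q_m D" unfolding r_def' using G_vf[OF qm_pos qm_le] .
  have rge: "r \<ge> Ms / q_m D"
    unfolding r_def' vf
  proof (rule cInf_greatest)
    show "V (q_m D) \<noteq> {}" using Vne[OF qm_pos] .
    fix v assume "v \<in> V (q_m D)"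
    then have "G v < Sup Q" unfolding V_def qm by auto
    then obtain q where q: "q \<in> Q" "G v < q" using less_cSup_iff[of Q] q0Q bddQ by blast
    have qpos: "q > 0" using q G01[of v] by auto
    have qle: "q \<le> q_m D" unfolding qm using cSup_upper[OF q(1) bddQ] .
    have q1: "q \<le> 1" using q unfolding Q_def by auto
    have "v \<ge> value_fn D q" unfolding vf using q by (intro cInf_lower[OF _ bddV[OF q1]]) (auto simp: V_def)
    moreover have "q * value_fn D q \<ge> Ms" using QR[OF q(1)] unfolding rev_curve_def .
    ultimately have "q * v \<ge> Ms" using qpos by (smt (verit) mult_left_mono)
    then have "v \<ge> Ms / q" using qpos by (simp add: divide_le_eq mult.commute)
    moreover have "Ms / q \<ge> Ms / q_m D" using Ms0 qpos qle by (intro divide_left_mono) auto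
    ultimately show "Ms / q_m D \<le> v" by linarith
  qed
  have "h r \<ge> Ms"
  proof -
    have "Ms = (Ms / q_m D) * q_m D" using qm_pos by simp
    also have "\<dots> \<le> r * q_m D" using rge qm_pos by (intro mult_right_mono) auto
    also have "\<dots> \<le> r * G r" using Gr r0 by (intro mult_left_mono) auto
    finally show ?thesis unfolding h_def .
  qed
  then have "\<forall>t. h t \<le> h r" using hle order_trans by blast
  then show ?thesis using r0 unfolding r_def h_def G_def by auto
qed

definition Rr :: "real measure \<Rightarrow> real \<Rightarrow> real" where
  "Rr D t = t * measure D {t..}"

definition Se :: "real measure \<Rightarrow> real \<Rightarrow> ennreal" where
  "Se D t = (\<integral>\<^sup>+ v. ennreal (if t \<le> v then v - t else 0) \<partial>D)"

lemma lottery_in_mechs: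
  assumes "0 \<le> lam" "lam \<le> 1" "0 \<le> p1" "0 \<le> p2"
  shows "lottery_pricing lam p1 p2 \<in> mechs D"
proof -
  define x where "x v = lam * (if p1 \<le> v then 1 else 0) + (1 - lam) * (if p2 \<le> v then 1 else 0)" for v :: real
  define p where "p v = lam * (if p1 \<le> v then p1 else 0) + (1 - lam) * (if p2 \<le> v then p2 else 0)" for v :: real
  have L: "lottery_pricing lam p1 p2 = (x, p)" unfolding lottery_pricing_def x_def p_def by simp
  have xm: "x \<in> borel_measurable borel" unfolding x_def by measurable
  have pm: "p \<in> borel_measurable borel" unfolding p_def by measurable
  have u: "x v * v - p v = lam * (if p1 \<le> v then v - p1 else 0) + (1 - lam) * (if p2 \<le> v then v - p2 else 0)" for v
    unfolding x_def p_def by (simp add: algebra_simps)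
  have x01: "0 \<le> x v \<and> x v \<le> 1" for v unfolding x_def using assms by auto
  have p0: "0 \<le> p v" for v unfolding p_def using assms by auto
  have u0: "0 \<le> x v * v - p v" for v unfolding u using assms by auto
  have ic: "x w * v - p w \<le> x v * v - p v" for v w
  proof -
    have a: "(if p1 \<le> w then v - p1 else 0) \<le> (if p1 \<le> v then v - p1 else 0)" by auto
    have b: "(if p2 \<le> w then v - p2 else 0) \<le> (if p2 \<le> v then v - p2 else 0)" by auto
    have "x w * v - p w = lam * (if p1 \<le> w then v - p1 else 0) + (1 - lam) * (if p2 \<le> w then v - p2 else 0)"
      unfolding x_def p_def by (simp add: algebra_simps)
    also have "\<dots> \<le> lam * (if p1 \<le> v then v - p1 else 0) + (1 - lam) * (if p2 \<le> v then v - p2 else 0)"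
      using assms a b by (intro add_mono mult_left_mono) auto
    finally show ?thesis unfolding u .
  qed
  show ?thesis unfolding L mechs_def using xm pm x01 p0 u0 ic by auto
qed

lemma nn_lin:
  fixes D :: "real measure"
  assumes "a \<in> borel_measurable D" "b \<in> borel_measurable D" "0 \<le> w" "w \<le> 1"
    and "AE v in D. 0 \<le> a v" "AE v in D. 0 \<le> b v"
  shows "(\<integral>\<^sup>+ v. ennreal (w * a v + (1 - w) * b v) \<partial>D) =
     ennreal w * (\<integral>\<^sup>+ v. ennreal (a v) \<partial>D) + ennreal (1 - w) * (\<integral>\<^sup>+ v. ennreal (b v) \<partial>D)"
proof -
  have "(\<integral>\<^sup>+ v. ennreal (w * a v + (1 - w) * b v) \<partial>D) =
        (\<integral>\<^sup>+ v. ennreal w * ennreal (a v) + ennreal (1 - w) * ennreal (b v) \<partial>D)"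
  proof (rule nn_integral_cong_AE)
    show "AE v in D. ennreal (w * a v + (1 - w) * b v) = ennreal w * ennreal (a v) + ennreal (1 - w) * ennreal (b v)"
      using assms(5,6)
    proof eventually_elim
      case (elim v)
      have n1: "0 \<le> w * a v" "0 \<le> (1 - w) * b v" using elim assms(3,4) by auto
      have "ennreal (w * a v + (1 - w) * b v) = ennreal (w * a v) + ennreal ((1 - w) * b v)"
        using n1 by (rule ennreal_plus)
      also have "\<dots> = ennreal w * ennreal (a v) + ennreal (1 - w) * ennreal (b v)"
        using elim assms(3,4) by (simp add: ennreal_mult)
      finally show ?case .
    qed
  qed
  also have "\<dots> = (\<integral>\<^sup>+ v. ennreal w * ennreal (a v) \<partial>D) + (\<integral>\<^sup>+ v. ennreal (1 - w) * ennreal (b v) \<partial>D)"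
    using assms(1,2) by (intro nn_integral_add) auto
  also have "\<dots> = ennreal w * (\<integral>\<^sup>+ v. ennreal (a v) \<partial>D) + ennreal (1 - w) * (\<integral>\<^sup>+ v. ennreal (b v) \<partial>D)"
    using assms(1,2) by (simp add: nn_integral_cmult)
  finally show ?thesis .
qed

lemma ind_integral:
  fixes D :: "real measure"
  assumes "prob_space D" "sets D = sets borel" "0 \<le> c"
  shows "(\<integral>\<^sup>+ v. ennreal (if t \<le> v then c else 0) \<partial>D) = ennreal (c * measure D {t..})"
proof -
  interpret prob_space D by fact
  have "(\<integral>\<^sup>+ v. ennreal (if t \<le> v then c else 0) \<partial>D) = (\<integral>\<^sup>+ v. ennreal c * indicator {t..} v \<partial>D)"
    by (intro nn_integral_cong) (auto simp: indicator_def)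
  also have "\<dots> = ennreal c * emeasure D {t..}" using assms(2) by (intro nn_integral_cmult_indicator) auto
  also have "\<dots> = ennreal (c * measure D {t..})" using assms(3) by (simp add: emeasure_eq_measure ennreal_mult)
  finally show ?thesis .
qed

lemma lottery_revenue:
  fixes D :: "real measure"
  assumes "prob_space D" "sets D = sets borel" "0 \<le> lam" "lam \<le> 1" "0 \<le> p1" "0 \<le> p2"
  shows "revenue D (lottery_pricing lam p1 p2) = ennreal (lam * Rr D p1 + (1 - lam) * Rr D p2)"
proof -
  have mD: "measurable D borel = measurable borel borel" using assms(2) by (rule measurable_cong_sets) simp
  have "revenue D (lottery_pricing lam p1 p2) =
    (\<integral>\<^sup>+ v. ennreal (lam * (if p1 \<le> v then p1 else 0) + (1 - lam) * (if p2 \<le> v then p2 else 0)) \<partial>D)"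
    unfolding revenue_def lottery_pricing_def by simp
  also have "\<dots> = ennreal lam * (\<integral>\<^sup>+ v. ennreal (if p1 \<le> v then p1 else 0) \<partial>D) +
       ennreal (1 - lam) * (\<integral>\<^sup>+ v. ennreal (if p2 \<le> v then p2 else 0) \<partial>D)"
    using assms by (intro nn_lin) (auto simp: mD)
  also have "\<dots> = ennreal lam * ennreal (Rr D p1) + ennreal (1 - lam) * ennreal (Rr D p2)"
    unfolding Rr_def using assms by (simp add: ind_integral)
  also have "\<dots> = ennreal (lam * Rr D p1 + (1 - lam) * Rr D p2)"
    using assms by (simp add: ennreal_plus ennreal_mult Rr_def)
  finally show ?thesis .
qed

lemma lottery_surplus:
  fixes D :: "real measure"
  assumes "prob_space D" "sets D = sets borel" "0 \<le> lam" "lam \<le> 1" "0 \<le> p1" "0 \<le> p2"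
  shows "surplus D (lottery_pricing lam p1 p2) = ennreal lam * Se D p1 + ennreal (1 - lam) * Se D p2"
proof -
  have mD: "measurable D borel = measurable borel borel" using assms(2) by (rule measurable_cong_sets) simp
  have "surplus D (lottery_pricing lam p1 p2) =
    (\<integral>\<^sup>+ v. ennreal (lam * (if p1 \<le> v then v - p1 else 0) + (1 - lam) * (if p2 \<le> v then v - p2 else 0)) \<partial>D)"
    unfolding surplus_def lottery_pricing_def fst_conv snd_conv
    by (intro nn_integral_cong arg_cong[where f=ennreal]) (auto simp: algebra_simps)
  also have "\<dots> = ennreal lam * Se D p1 + ennreal (1 - lam) * Se D p2"
    unfolding Se_def using assms by (intro nn_lin) (auto simp: mD)
  finally show ?thesis .
qed

lemma AE_from_supp:
  assumes "AE v in D. v \<in> S" "\<forall>v\<in>S. P v"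
  shows "AE v in D. P v"
  using assms(1) by (rule AE_mp) (use assms(2) in \<open>auto intro!: AE_I2\<close>)

definition mix :: "real \<Rightarrow> mech \<Rightarrow> mech \<Rightarrow> mech" where
  "mix w M1 M2 = (\<lambda>v. w * fst M1 v + (1 - w) * fst M2 v, \<lambda>v. w * snd M1 v + (1 - w) * snd M2 v)"

lemma mix_in_mechs:
  assumes "M1 \<in> mechs D" "M2 \<in> mechs D" "0 \<le> w" "w \<le> 1"
  shows "mix w M1 M2 \<in> mechs D"
proof -
  obtain x1 p1 where M1: "M1 = (x1, p1)" by fastforce
  obtain x2 p2 where M2: "M2 = (x2, p2)" by fastforce
  note m1 = assms(1)[unfolded M1 mechs_def, simplified]
  note m2 = assms(2)[unfolded M2 mechs_def, simplified]
  have meas: "(\<lambda>v. w * x1 v + (1 - w) * x2 v) \<in> borel_measurable borel"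
     "(\<lambda>v. w * p1 v + (1 - w) * p2 v) \<in> borel_measurable borel"
    using m1 m2 by auto
  have A: "0 \<le> w * x1 v + (1 - w) * x2 v \<and> w * x1 v + (1 - w) * x2 v \<le> 1 \<and>
     0 \<le> w * p1 v + (1 - w) * p2 v \<and>
     0 \<le> (w * x1 v + (1 - w) * x2 v) * v - (w * p1 v + (1 - w) * p2 v)" if v: "v \<in> supp D" for v
  proof -
    have a: "0 \<le> x1 v" "x1 v \<le> 1" "0 \<le> p1 v" "0 \<le> x1 v * v - p1 v" using m1 v by auto
    have b: "0 \<le> x2 v" "x2 v \<le> 1" "0 \<le> p2 v" "0 \<le> x2 v * v - p2 v" using m2 v by auto
    have e: "(w * x1 v + (1 - w) * x2 v) * v - (w * p1 v + (1 - w) * p2 v) =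
       w * (x1 v * v - p1 v) + (1 - w) * (x2 v * v - p2 v)" by (simp add: algebra_simps)
    have "w * x1 v + (1 - w) * x2 v \<le> w * 1 + (1 - w) * 1"
      using a b assms(3,4) by (intro add_mono mult_left_mono) auto
    then show ?thesis unfolding e using a b assms(3,4) by auto
  qed
  have B: "(w * x1 u + (1 - w) * x2 u) * v - (w * p1 u + (1 - w) * p2 u) \<le>
       (w * x1 v + (1 - w) * x2 v) * v - (w * p1 v + (1 - w) * p2 v)"
    if v: "v \<in> supp D" and u: "u \<in> supp D" for v u
  proof -
    have a: "x1 u * v - p1 u \<le> x1 v * v - p1 v" using m1 u v by auto
    have b: "x2 u * v - p2 u \<le> x2 v * v - p2 v" using m2 u v by auto
    have "w * (x1 u * v - p1 u) + (1 - w) * (x2 u * v - p2 u) \<le>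
          w * (x1 v * v - p1 v) + (1 - w) * (x2 v * v - p2 v)"
      using a b assms(3,4) by (intro add_mono mult_left_mono) auto
    then show ?thesis by (simp add: algebra_simps)
  qed
  show ?thesis unfolding mix_def M1 M2 mechs_def using meas A B by auto
qed

lemma mix_rev_sur:
  fixes D :: "real measure"
  assumes P: "prob_space D" and sD: "sets D = sets borel"
    and "M1 \<in> mechs D" "M2 \<in> mechs D" "0 \<le> w" "w \<le> 1"
  shows "revenue D (mix w M1 M2) = ennreal w * revenue D M1 + ennreal (1 - w) * revenue D M2"
    "surplus D (mix w M1 M2) = ennreal w * surplus D M1 + ennreal (1 - w) * surplus D M2"
proof -
  obtain x1 p1 where M1: "M1 = (x1, p1)" by fastforce
  obtain x2 p2 where M2: "M2 = (x2, p2)" by fastforce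
  note m1 = assms(3)[unfolded M1 mechs_def, simplified]
  note m2 = assms(4)[unfolded M2 mechs_def, simplified]
  have mD: "measurable D borel = measurable borel borel" using sD by (rule measurable_cong_sets) simp
  have AE: "AE v in D. v \<in> supp D" by (rule ae_supp[OF P sD])
  have [measurable]: "x1 \<in> borel_measurable borel" "x2 \<in> borel_measurable borel"
     "p1 \<in> borel_measurable borel" "p2 \<in> borel_measurable borel" using m1 m2 by auto
  have "revenue D (mix w M1 M2) = (\<integral>\<^sup>+ v. ennreal (w * p1 v + (1 - w) * p2 v) \<partial>D)"
    unfolding revenue_def mix_def M1 M2 by simp
  also have "\<dots> = ennreal w * revenue D M1 + ennreal (1 - w) * revenue D M2"
    unfolding revenue_def M1 M2 snd_conv
  proof (rule nn_lin)
    show "AE v in D. 0 \<le> p1 v" using AE_from_supp[OF AE] m1 by auto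
    show "AE v in D. 0 \<le> p2 v" using AE_from_supp[OF AE] m2 by auto
  qed (use assms(5,6) in \<open>auto simp: mD\<close>)
  finally show "revenue D (mix w M1 M2) = ennreal w * revenue D M1 + ennreal (1 - w) * revenue D M2" .
  have "surplus D (mix w M1 M2) = (\<integral>\<^sup>+ v. ennreal (w * (x1 v * v - p1 v) + (1 - w) * (x2 v * v - p2 v)) \<partial>D)"
    unfolding surplus_def mix_def M1 M2 by (simp add: algebra_simps)
  also have "\<dots> = ennreal w * surplus D M1 + ennreal (1 - w) * surplus D M2"
    unfolding surplus_def M1 M2 fst_conv snd_conv
  proof (rule nn_lin)
    show "AE v in D. 0 \<le> x1 v * v - p1 v" using AE_from_supp[OF AE] m1 by auto
    show "AE v in D. 0 \<le> x2 v * v - p2 v" using AE_from_supp[OF AE] m2 by auto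
  qed (use assms(5,6) in \<open>auto simp: mD\<close>)
  finally show "surplus D (mix w M1 M2) = ennreal w * surplus D M1 + ennreal (1 - w) * surplus D M2" .
qed

lemma squeeze_step:
  fixes h X :: "real \<Rightarrow> real"
  assumes "\<And>u w. a \<le> u \<Longrightarrow> u \<le> w \<Longrightarrow> w \<le> b \<Longrightarrow> \<bar>h w - h u\<bar> \<le> (w - u) * (X w - X u)"
    and "0 \<le> d" "a + real K * d \<le> b"
  shows "\<bar>h (a + real K * d) - h a\<bar> \<le> d * (X (a + real K * d) - X a)"
  using assms(3)
proof (induction K)
  case 0
  then show ?case by simp
next
  case (Suc K)
  have le1: "a + real K * d \<le> a + real (Suc K) * d" using assms(2) by (simp add: algebra_simps)
  have le0: "a \<le> a + real K * d" using assms(2) by simp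
  have IH: "\<bar>h (a + real K * d) - h a\<bar> \<le> d * (X (a + real K * d) - X a)"
    using Suc le1 by auto
  have st: "\<bar>h (a + real (Suc K) * d) - h (a + real K * d)\<bar> \<le>
      (a + real (Suc K) * d - (a + real K * d)) * (X (a + real (Suc K) * d) - X (a + real K * d))"
    using assms(1)[OF le0 le1 Suc.prems] .
  have e: "a + real (Suc K) * d - (a + real K * d) = d" by (simp add: algebra_simps)
  have "\<bar>h (a + real (Suc K) * d) - h a\<bar> \<le>
        \<bar>h (a + real (Suc K) * d) - h (a + real K * d)\<bar> + \<bar>h (a + real K * d) - h a\<bar>" by linarith
  also have "\<dots> \<le> d * (X (a + real (Suc K) * d) - X (a + real K * d)) + d * (X (a + real K * d) - X a)"
    using st IH unfolding e by linarith
  also have "\<dots> = d * (X (a + real (Suc K) * d) - X a)" by (simp add: algebra_simps)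
  finally show ?case .
qed

lemma squeeze:
  fixes f g X :: "real \<Rightarrow> real"
  assumes ab: "a \<le> b"
    and F: "\<And>u w. a \<le> u \<Longrightarrow> u \<le> w \<Longrightarrow> w \<le> b \<Longrightarrow>
        u * (X w - X u) \<le> f w - f u \<and> f w - f u \<le> w * (X w - X u)"
    and G: "\<And>u w. a \<le> u \<Longrightarrow> u \<le> w \<Longrightarrow> w \<le> b \<Longrightarrow>
        u * (X w - X u) \<le> g w - g u \<and> g w - g u \<le> w * (X w - X u)"
    and Xm: "X a \<le> X b"
  shows "f b - f a = g b - g a"
proof (rule ccontr)
  define h where "h t = f t - g t" for t
  assume ne: "f b - f a \<noteq> g b - g a"
  then have dpos: "\<bar>h b - h a\<bar> > 0" unfolding h_def by auto
  have H: "\<bar>h w - h u\<bar> \<le> (w - u) * (X w - X u)" if "a \<le> u" "u \<le> w" "w \<le> b" for u w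
  proof -
    have "\<bar>h w - h u\<bar> \<le> w * (X w - X u) - u * (X w - X u)"
      using F[OF that] G[OF that] unfolding h_def by linarith
    then show ?thesis by (simp add: algebra_simps)
  qed
  define C where "C = (b - a) * (X b - X a)"
  have C0: "C \<ge> 0" unfolding C_def using ab Xm by simp
  obtain K :: nat where K: "C / \<bar>h b - h a\<bar> < real K" using reals_Archimedean2 by blast
  have Kpos: "real K > 0" using K C0 dpos by (smt (verit) divide_nonneg_pos)
  define d where "d = (b - a) / real K"
  have d0: "0 \<le> d" unfolding d_def using ab Kpos by simp
  have aK: "a + real K * d = b" unfolding d_def using Kpos by simp
  have "\<bar>h (a + real K * d) - h a\<bar> \<le> d * (X (a + real K * d) - X a)"
    by (rule squeeze_step[OF H d0]) (use aK in auto)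
  then have "\<bar>h b - h a\<bar> \<le> d * (X b - X a)" by (simp only: aK)
  moreover have "d * (X b - X a) = C / real K" unfolding C_def d_def by simp
  ultimately have "\<bar>h b - h a\<bar> \<le> C / real K" by simp
  moreover have "C / real K < \<bar>h b - h a\<bar>" using K Kpos dpos by (simp add: field_simps)
  ultimately show False by linarith
qed

definition Wset :: "(real \<Rightarrow> real) \<Rightarrow> real set \<Rightarrow> real set" where
  "Wset x S = {s. \<exists>w\<in>S. s \<le> x w}"

definition tau :: "(real \<Rightarrow> real) \<Rightarrow> real set \<Rightarrow> real \<Rightarrow> real" where
  "tau x S s = Inf {w\<in>S. s \<le> x w}"

definition pit :: "(real \<Rightarrow> real) \<Rightarrow> (real \<Rightarrow> real) \<Rightarrow> real \<Rightarrow> real set \<Rightarrow> real \<Rightarrow> real" where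
  "pit x p vL S s = (if s \<in> Wset x S then (if s \<le> x vL then p vL / x vL else tau x S s) else 0)"

context
  fixes D :: "real measure" and x p :: "real \<Rightarrow> real" and vL :: real and S :: "real set"
  assumes P: "prob_space D" and sD: "sets D = sets borel"
    and SD: "S = supp D"
    and vL0: "0 \<le> vL" and vLS: "vL \<in> S" and Sge: "S \<subseteq> {vL..}"
    and Sint: "\<And>v. v \<in> S \<Longrightarrow> {vL..v} \<subseteq> S" and Scl: "closed S"
    and M: "(x, p) \<in> mechs D"
begin

lemma xm: "x \<in> borel_measurable borel" and pm: "p \<in> borel_measurable borel"
  and x01: "\<And>v. v \<in> S \<Longrightarrow> 0 \<le> x v \<and> x v \<le> 1"
  and p0: "\<And>v. v \<in> S \<Longrightarrow> 0 \<le> p v"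
  and ir: "\<And>v. v \<in> S \<Longrightarrow> p v \<le> x v * v"
  and ic: "\<And>v w. v \<in> S \<Longrightarrow> w \<in> S \<Longrightarrow> x w * v - p w \<le> x v * v - p v"
  using M unfolding mechs_def SD by auto

lemma x_mono: assumes "u \<in> S" "w \<in> S" "u \<le> w" shows "x u \<le> x w"
proof (rule ccontr)
  assume n: "\<not> x u \<le> x w"
  have a: "x u * w - p u \<le> x w * w - p w" using ic[OF assms(2,1)] .
  have b: "x w * u - p w \<le> x u * u - p u" using ic[OF assms(1,2)] .
  have "(x u - x w) * (w - u) \<le> 0" using a b by (simp add: algebra_simps)
  moreover have "u < w" using assms(3) n by (metis dual_order.refl order_less_le)
  ultimately show False using n by (simp add: mult_le_0_iff)
qed

abbreviation "W \<equiv> Wset x S"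
abbreviation "\<pi> \<equiv> pit x p vL S"
abbreviation "c0 \<equiv> p vL / x vL"

lemma c0_bounds: "0 \<le> c0" "c0 \<le> vL"
proof -
  show "0 \<le> c0" using p0[OF vLS] x01[OF vLS] by simp
  show "c0 \<le> vL"
  proof (cases "x vL = 0")
    case True then show ?thesis using vL0 by simp
  next
    case False
    then have "x vL > 0" using x01[OF vLS] by simp
    then show ?thesis using ir[OF vLS] by (simp add: divide_le_eq mult.commute)
  qed
qed

lemma W_down: "s' \<le> s \<Longrightarrow> s \<in> W \<Longrightarrow> s' \<in> W"
  unfolding Wset_def by (auto intro: order_trans)

lemma W_mem: "v \<in> S \<Longrightarrow> s \<le> x v \<Longrightarrow> s \<in> W"
  unfolding Wset_def by auto

lemma W_interval: "is_interval W"
  unfolding is_interval_1 using W_down by blast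

lemma W_borel: "W \<in> sets borel"
  by (rule real_interval_borel_measurable[OF W_interval])

lemma bddS: "bdd_below {w\<in>S. s \<le> x w}"
  using Sge by (auto intro!: bdd_belowI[of _ vL])

lemma tau_le: "w \<in> S \<Longrightarrow> s \<le> x w \<Longrightarrow> tau x S s \<le> w"
  unfolding tau_def by (rule cInf_lower[OF _ bddS]) auto

lemma tau_ge: assumes "s \<in> W" "\<And>w. w \<in> S \<Longrightarrow> s \<le> x w \<Longrightarrow> u \<le> w" shows "u \<le> tau x S s"
  unfolding tau_def
proof (rule cInf_greatest)
  show "{w \<in> S. s \<le> x w} \<noteq> {}" using assms(1) unfolding Wset_def by auto
qed (use assms(2) in auto)

lemma tau_ge_vL: "s \<in> W \<Longrightarrow> vL \<le> tau x S s"
  by (rule tau_ge) (use Sge in auto)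

lemma pit_nonneg: "0 \<le> \<pi> s"
  unfolding pit_def using c0_bounds tau_ge_vL vL0 by (auto intro: order_trans)

lemma pit_le: assumes "v \<in> S" "s \<le> x v" shows "\<pi> s \<le> v"
proof -
  have sW: "s \<in> W" using W_mem[OF assms] .
  show ?thesis
  proof (cases "s \<le> x vL")
    case True
    then have "\<pi> s = c0" unfolding pit_def using sW by simp
    then show ?thesis using c0_bounds Sge assms(1) by auto
  next
    case False
    then have "\<pi> s = tau x S s" unfolding pit_def using sW by simp
    then show ?thesis using tau_le[OF assms] by simp
  qed
qed

lemma pit_c0: "0 \<le> s \<Longrightarrow> s \<le> x vL \<Longrightarrow> \<pi> s = c0"
  unfolding pit_def using W_mem[OF vLS] by simp

lemma pit_tau: "s \<in> W \<Longrightarrow> \<not> s \<le> x vL \<Longrightarrow> \<pi> s = tau x S s"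
  unfolding pit_def by simp

lemma pit_mono: "mono_on W \<pi>"
proof (rule mono_onI)
  fix s s' assume s: "s \<in> W" "s' \<in> W" "s \<le> s'"
  show "\<pi> s \<le> \<pi> s'"
  proof (cases "s' \<le> x vL")
    case True
    then show ?thesis unfolding pit_def using s by auto
  next
    case F': False
    have t': "\<pi> s' = tau x S s'" using pit_tau[OF s(2) F'] .
    show ?thesis
    proof (cases "s \<le> x vL")
      case True
      then have "\<pi> s = c0" unfolding pit_def using s by simp
      then show ?thesis using t' c0_bounds tau_ge_vL[OF s(2)] by simp
    next
      case False
      then have "\<pi> s = tau x S s" using pit_tau[OF s(1)] by simp
      moreover have "tau x S s \<le> tau x S s'"
        by (rule tau_ge[OF s(2)]) (use s(3) in \<open>auto intro: tau_le\<close>)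
      ultimately show ?thesis using t' by simp
    qed
  qed
qed

lemma pit_meas: "\<pi> \<in> borel_measurable borel"
proof (rule borel_measurable_piecewise_mono[of "{W, - W}"])
  show "countable {W, - W}" by simp
  show "c \<in> sets borel" if "c \<in> {W, - W}" for c using that W_borel by auto
  show "\<Union> {W, - W} = UNIV" by auto
  show "mono_on c \<pi>" if "c \<in> {W, - W}" for c
  proof -
    have "mono_on (- W) \<pi>" by (rule mono_onI) (simp add: pit_def)
    then show ?thesis using that pit_mono by auto
  qed
qed

lemma pit_int: assumes "v \<in> S" shows "\<pi> integrable_on {0..x v}"
proof (rule integrable_on_mono_on)
  show "mono_on {0..x v} \<pi>" by (rule mono_on_subset[OF pit_mono]) (use W_mem[OF assms] in auto)
qed

definition "G v = integral {0..x v} \<pi>"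

lemma G_vL: "G vL = p vL"
proof -
  have "G vL = integral {0..x vL} (\<lambda>s. c0)"
    unfolding G_def by (rule integral_cong) (auto simp: pit_c0)
  also have "\<dots> = x vL * c0" using x01[OF vLS] by simp
  also have "\<dots> = p vL"
  proof (cases "x vL = 0")
    case True
    then have "p vL = 0" using ir[OF vLS] p0[OF vLS] by simp
    then show ?thesis using True by simp
  qed simp
  finally show ?thesis .
qed

lemma G_bounds:
  assumes "vL \<le> u" "u \<le> w" "w \<in> S"
  shows "u * (x w - x u) \<le> G w - G u \<and> G w - G u \<le> w * (x w - x u)"
proof -
  have uS: "u \<in> S" using Sint[OF assms(3)] assms by auto
  have xu: "0 \<le> x u" "x u \<le> x w" using x01[OF uS] x_mono[OF uS assms(3,2)] by auto
  have iw: "\<pi> integrable_on {0..x w}" by (rule pit_int[OF assms(3)])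
  have "integral {0..x u} \<pi> + integral {x u..x w} \<pi> = integral {0..x w} \<pi>"
    by (rule Henstock_Kurzweil_Integration.integral_combine[OF xu iw])
  then have eq: "G w - G u = integral {x u<..<x w} \<pi>"
    unfolding G_def using integral_open_interval_real[of "x u" "x w" \<pi>] by simp
  have iuw: "\<pi> integrable_on {x u<..<x w}"
    using integrable_on_subinterval[OF iw, of "x u" "x w"] xu integrable_on_open_interval_real by auto
  have bnd: "u \<le> \<pi> s \<and> \<pi> s \<le> w" if s: "s \<in> {x u<..<x w}" for s
  proof -
    have sW: "s \<in> W" using W_mem[OF assms(3), of s] s by auto
    have sv: "\<not> s \<le> x vL" using s x_mono[OF vLS uS assms(1)] by auto
    have "\<pi> s = tau x S s" using pit_tau[OF sW sv] .
    moreover have "tau x S s \<le> w" using s by (intro tau_le[OF assms(3)]) auto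
    moreover have "u \<le> tau x S s"
    proof (rule tau_ge[OF sW])
      fix w' assume w': "w' \<in> S" "s \<le> x w'"
      show "u \<le> w'"
      proof (rule ccontr)
        assume "\<not> u \<le> w'"
        then have "x w' \<le> x u" using x_mono[OF w'(1) uS] by auto
        then show False using w' s by auto
      qed
    qed
    ultimately show ?thesis by simp
  qed
  have c1a: "integral {x u..x w} (\<lambda>s. u) = u * (x w - x u)" using xu by (simp add: mult.commute)
  have c1: "integral {x u<..<x w} (\<lambda>s. u) = u * (x w - x u)"
    using integral_open_interval_real[of "x u" "x w" "\<lambda>s. u"] c1a by simp
  have c2a: "integral {x u..x w} (\<lambda>s. w) = w * (x w - x u)" using xu by (simp add: mult.commute)
  have c2: "integral {x u<..<x w} (\<lambda>s. w) = w * (x w - x u)"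
    using integral_open_interval_real[of "x u" "x w" "\<lambda>s. w"] c2a by simp
  have ic1: "(\<lambda>s. u) integrable_on {x u<..<x w}" using integrable_on_open_interval_real by blast
  have ic2: "(\<lambda>s. w) integrable_on {x u<..<x w}" using integrable_on_open_interval_real by blast
  have "integral {x u<..<x w} (\<lambda>s. u) \<le> integral {x u<..<x w} \<pi>"
    by (rule integral_le[OF ic1 iuw]) (use bnd in auto)
  moreover have "integral {x u<..<x w} \<pi> \<le> integral {x u<..<x w} (\<lambda>s. w)"
    by (rule integral_le[OF iuw ic2]) (use bnd in auto)
  ultimately show ?thesis unfolding eq c1 c2 by simp
qed

lemma p_bounds:
  assumes "vL \<le> u" "u \<le> w" "w \<in> S"
  shows "u * (x w - x u) \<le> p w - p u \<and> p w - p u \<le> w * (x w - x u)"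
proof -
  have uS: "u \<in> S" using Sint[OF assms(3)] assms by auto
  have a: "x u * w - p u \<le> x w * w - p w" using ic[OF assms(3) uS] .
  have b: "x w * u - p w \<le> x u * u - p u" using ic[OF uS assms(3)] .
  show ?thesis using a b by (simp add: algebra_simps)
qed

lemma p_eq_G: assumes "v \<in> S" shows "p v = G v"
proof -
  have vv: "vL \<le> v" using assms Sge by auto
  have "p v - p vL = G v - G vL"
  proof (rule squeeze[where X = x])
    show "vL \<le> v" by fact
    show "x vL \<le> x v" using x_mono[OF vLS assms vv] .
    fix u w assume uw: "vL \<le> u" "u \<le> w" "w \<le> v"
    have wS: "w \<in> S" using Sint[OF assms] uw by auto
    show "u * (x w - x u) \<le> p w - p u \<and> p w - p u \<le> w * (x w - x u)"
      using p_bounds[OF uw(1,2) wS] .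
    show "u * (x w - x u) \<le> G w - G u \<and> G w - G u \<le> w * (x w - x u)"
      using G_bounds[OF uw(1,2) wS] .
  qed
  then show ?thesis using G_vL by simp
qed


lemma pit_has: assumes "v \<in> S" shows "(\<pi> has_integral G v) {0..x v}"
  unfolding G_def using pit_int[OF assms] by (rule integrable_integral)

lemma p_int: assumes "v \<in> S"
  shows "ennreal (p v) = (\<integral>\<^sup>+ s. (if 0 \<le> s \<and> s \<le> x v then ennreal (\<pi> s) else 0) \<partial>lborel)"
proof -
  have "(\<integral>\<^sup>+ s. ennreal (\<pi> s) * indicator {0..x v} s \<partial>lborel) = ennreal (G v)"
    by (rule nn_integral_has_integral_lebesgue'[OF _ pit_has[OF assms]]) (rule pit_nonneg)
  moreover have "(\<integral>\<^sup>+ s. ennreal (\<pi> s) * indicator {0..x v} s \<partial>lborel) =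
      (\<integral>\<^sup>+ s. (if 0 \<le> s \<and> s \<le> x v then ennreal (\<pi> s) else 0) \<partial>lborel)"
    by (intro nn_integral_cong) (auto simp: indicator_def)
  ultimately show ?thesis using p_eq_G[OF assms] by simp
qed

lemma u_int: assumes "v \<in> S"
  shows "ennreal (x v * v - p v) = (\<integral>\<^sup>+ s. (if 0 \<le> s \<and> s \<le> x v then ennreal (v - \<pi> s) else 0) \<partial>lborel)"
proof -
  have x0: "0 \<le> x v" using x01[OF assms] by simp
  have h: "((\<lambda>s. v - \<pi> s) has_integral (measure lborel {0..x v} *\<^sub>R v - G v)) {0..x v}"
    by (rule has_integral_diff[OF has_integral_const_real pit_has[OF assms]])
  have e: "measure lborel {0..x v} *\<^sub>R v - G v = x v * v - p v" using x0 p_eq_G[OF assms] by simp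
  have "(\<integral>\<^sup>+ s. ennreal (v - \<pi> s) * indicator {0..x v} s \<partial>lborel) = ennreal (x v * v - p v)"
    by (rule nn_integral_has_integral_lebesgue'[OF _ h[unfolded e]]) (use pit_le[OF assms] in auto)
  moreover have "(\<integral>\<^sup>+ s. ennreal (v - \<pi> s) * indicator {0..x v} s \<partial>lborel) =
      (\<integral>\<^sup>+ s. (if 0 \<le> s \<and> s \<le> x v then ennreal (v - \<pi> s) else 0) \<partial>lborel)"
    by (intro nn_integral_cong) (auto simp: indicator_def)
  ultimately show ?thesis by simp
qed

lemma S_borel: "S \<in> sets borel" using Scl by simp

lemma setsP: "sets (D \<Otimes>\<^sub>M lborel) = sets (borel \<Otimes>\<^sub>M borel)"
  by (rule sets_pair_measure_cong[OF sD sets_lborel])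

lemma mD: "measurable D borel = measurable borel borel"
  using sD by (rule measurable_cong_sets) simp

lemma F1_meas: "(\<lambda>(v, s). if v \<in> S \<and> 0 \<le> s \<and> s \<le> x v then ennreal (\<pi> s) else 0) \<in> borel_measurable (D \<Otimes>\<^sub>M lborel)"
proof -
  note [measurable] = xm pit_meas S_borel
  have "(\<lambda>(v, s). if v \<in> S \<and> 0 \<le> s \<and> s \<le> x v then ennreal (\<pi> s) else 0) \<in> borel_measurable (borel \<Otimes>\<^sub>M borel)"
    by measurable
  moreover have eq: "borel_measurable (D \<Otimes>\<^sub>M lborel) = borel_measurable (borel \<Otimes>\<^sub>M borel)"
    by (rule measurable_cong_sets[OF setsP refl])
  ultimately show ?thesis by (simp only: eq)
qed

lemma F2_meas: "(\<lambda>(v, s). if v \<in> S \<and> 0 \<le> s \<and> s \<le> x v then ennreal (v - \<pi> s) else 0) \<in> borel_measurable (D \<Otimes>\<^sub>M lborel)"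
proof -
  note [measurable] = xm pit_meas S_borel
  have "(\<lambda>(v, s). if v \<in> S \<and> 0 \<le> s \<and> s \<le> x v then ennreal (v - \<pi> s) else 0) \<in> borel_measurable (borel \<Otimes>\<^sub>M borel)"
    by measurable
  moreover have eq: "borel_measurable (D \<Otimes>\<^sub>M lborel) = borel_measurable (borel \<Otimes>\<^sub>M borel)"
    by (rule measurable_cong_sets[OF setsP refl])
  ultimately show ?thesis by (simp only: eq)
qed

lemma PS: "pair_sigma_finite D lborel"
  unfolding pair_sigma_finite_def using prob_space_imp_sigma_finite[OF P] sigma_finite_lborel by auto

lemma AES: "AE v in D. v \<in> S" unfolding SD by (rule ae_supp[OF P sD])

lemma decomp:
  assumes r0: "0 \<le> r" and rmax: "\<And>t. Rr D t \<le> Rr D r"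
  shows "revenue D (x, p) \<le> (\<integral>\<^sup>+ s. ennreal (indicator {0..1} s * Rr D (min (\<pi> s) r)) \<partial>lborel)"
    and "surplus D (x, p) \<le> (\<integral>\<^sup>+ s. ennreal (indicator {0..1} s) * Se D (min (\<pi> s) r) \<partial>lborel)"
proof -
  interpret prob_space D by (rule P)
  define F1 where "F1 v s = (if v \<in> S \<and> 0 \<le> s \<and> s \<le> x v then ennreal (\<pi> s) else 0)" for v s
  define F2 where "F2 v s = (if v \<in> S \<and> 0 \<le> s \<and> s \<le> x v then ennreal (v - \<pi> s) else 0)" for v s
  have F1m: "case_prod F1 \<in> borel_measurable (D \<Otimes>\<^sub>M lborel)" unfolding F1_def using F1_meas by simp
  have F2m: "case_prod F2 \<in> borel_measurable (D \<Otimes>\<^sub>M lborel)" unfolding F2_def using F2_meas by simp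
  have Rmin: "Rr D t \<le> Rr D (min t r)" for t
    by (cases "t \<le> r") (auto simp: min_def rmax)
  have "revenue D (x, p) = (\<integral>\<^sup>+ v. ennreal (p v) \<partial>D)" unfolding revenue_def by simp
  also have "\<dots> = (\<integral>\<^sup>+ v. (\<integral>\<^sup>+ s. F1 v s \<partial>lborel) \<partial>D)"
  proof (rule nn_integral_cong_AE)
    show "AE v in D. ennreal (p v) = (\<integral>\<^sup>+ s. F1 v s \<partial>lborel)"
      using AES by (rule AE_mp) (auto intro!: AE_I2 simp: F1_def p_int)
  qed
  also have "\<dots> = (\<integral>\<^sup>+ s. (\<integral>\<^sup>+ v. F1 v s \<partial>D) \<partial>lborel)"
    using pair_sigma_finite.Fubini'[OF PS F1m] by simp
  also have "\<dots> \<le> (\<integral>\<^sup>+ s. ennreal (indicator {0..1} s * Rr D (min (\<pi> s) r)) \<partial>lborel)"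
  proof (rule nn_integral_mono)
    fix s :: real
    have "(\<integral>\<^sup>+ v. F1 v s \<partial>D) \<le> (\<integral>\<^sup>+ v. ennreal (indicator {0..1} s * \<pi> s) * indicator {\<pi> s..} v \<partial>D)"
    proof (rule nn_integral_mono)
      fix v
      show "F1 v s \<le> ennreal (indicator {0..1} s * \<pi> s) * indicator {\<pi> s..} v"
      proof (cases "v \<in> S \<and> 0 \<le> s \<and> s \<le> x v")
        case True
        then have "s \<in> {0..1}" using x01[of v] by auto
        moreover have "\<pi> s \<le> v" using True pit_le by auto
        ultimately have i1: "indicator {0..1} s * \<pi> s = \<pi> s" "indicator {\<pi> s..} v = (1::ennreal)"
          by auto
        have "F1 v s = ennreal (\<pi> s)" unfolding F1_def using True by simp
        then show ?thesis by (simp only: i1 mult_1_right order_refl)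
      next
        case False
        then have "F1 v s = 0" unfolding F1_def by (intro if_not_P)
        then show ?thesis by simp
      qed
    qed
    also have "\<dots> = ennreal (indicator {0..1} s * \<pi> s) * emeasure D {\<pi> s..}"
      using sD by (intro nn_integral_cmult_indicator) auto
    also have "\<dots> = ennreal (indicator {0..1} s * Rr D (\<pi> s))"
      unfolding Rr_def using pit_nonneg[of s]
      by (simp add: emeasure_eq_measure ennreal_mult[symmetric] mult.assoc)
    also have "\<dots> \<le> ennreal (indicator {0..1} s * Rr D (min (\<pi> s) r))"
      using Rmin[of "\<pi> s"] by (intro ennreal_leI mult_left_mono) (auto simp: indicator_def)
    finally show "(\<integral>\<^sup>+ v. F1 v s \<partial>D) \<le> ennreal (indicator {0..1} s * Rr D (min (\<pi> s) r))" .
  qed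
  finally show "revenue D (x, p) \<le> (\<integral>\<^sup>+ s. ennreal (indicator {0..1} s * Rr D (min (\<pi> s) r)) \<partial>lborel)" .

  have "surplus D (x, p) = (\<integral>\<^sup>+ v. ennreal (x v * v - p v) \<partial>D)" unfolding surplus_def by simp
  also have "\<dots> = (\<integral>\<^sup>+ v. (\<integral>\<^sup>+ s. F2 v s \<partial>lborel) \<partial>D)"
  proof (rule nn_integral_cong_AE)
    show "AE v in D. ennreal (x v * v - p v) = (\<integral>\<^sup>+ s. F2 v s \<partial>lborel)"
      using AES by (rule AE_mp) (auto intro!: AE_I2 simp: F2_def u_int)
  qed
  also have "\<dots> = (\<integral>\<^sup>+ s. (\<integral>\<^sup>+ v. F2 v s \<partial>D) \<partial>lborel)"
    using pair_sigma_finite.Fubini'[OF PS F2m] by simp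
  also have "\<dots> \<le> (\<integral>\<^sup>+ s. ennreal (indicator {0..1} s) * Se D (min (\<pi> s) r) \<partial>lborel)"
  proof (rule nn_integral_mono)
    fix s :: real
    define t where "t = min (\<pi> s) r"
    have "(\<integral>\<^sup>+ v. F2 v s \<partial>D) \<le> (\<integral>\<^sup>+ v. ennreal (indicator {0..1} s) * ennreal (if t \<le> v then v - t else 0) \<partial>D)"
    proof (rule nn_integral_mono)
      fix v
      show "F2 v s \<le> ennreal (indicator {0..1} s) * ennreal (if t \<le> v then v - t else 0)"
      proof (cases "v \<in> S \<and> 0 \<le> s \<and> s \<le> x v")
        case True
        then have "s \<in> {0..1}" using x01[of v] by auto
        moreover have "\<pi> s \<le> v" using True pit_le by auto
        moreover have "t \<le> \<pi> s" unfolding t_def by simp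
        ultimately show ?thesis unfolding F2_def using True by (simp add: indicator_def ennreal_leI)
      next
        case False
        then have "F2 v s = 0" unfolding F2_def by (intro if_not_P)
        then show ?thesis by simp
      qed
    qed
    also have "\<dots> = ennreal (indicator {0..1} s) * Se D t"
      unfolding Se_def by (rule nn_integral_cmult) (simp add: mD)
    finally show "(\<integral>\<^sup>+ v. F2 v s \<partial>D) \<le> ennreal (indicator {0..1} s) * Se D (min (\<pi> s) r)"
      unfolding t_def .
  qed
  finally show "surplus D (x, p) \<le> (\<integral>\<^sup>+ s. ennreal (indicator {0..1} s) * Se D (min (\<pi> s) r) \<partial>lborel)" .
qed

end

lemma po_eq:
  assumes "pareto_optimal D M" "M' \<in> mechs D" "revenue D M \<le> revenue D M'" "surplus D M \<le> surplus D M'"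
  shows "revenue D M' = revenue D M \<and> surplus D M' = surplus D M"
proof -
  have "\<not> pareto_dominated D M M'" using assms(1,2) unfolding pareto_optimal_def by blast
  then have "\<not> (revenue D M' > revenue D M \<or> surplus D M' > surplus D M)"
    using assms(3,4) unfolding pareto_dominated_def by blast
  then show ?thesis using assms(3,4) by (simp add: not_less antisym)
qed

lemma two_d:
  fixes n1 n2 y1 y2 z1 z2 :: real
  assumes "n1 \<noteq> 0 \<or> n2 \<noteq> 0" "n1 * y1 + n2 * y2 = n1 * z1 + n2 * z2"
    "- n2 * y1 + n1 * y2 = - n2 * z1 + n1 * z2"
  shows "y1 = z1 \<and> y2 = z2"
proof -
  have q1: "n1 * n1 \<ge> 0" "n2 * n2 \<ge> 0" by simp_all
  have "n1 * n1 > 0 \<or> n2 * n2 > 0" using assms(1) by (metis mult_pos_pos mult_neg_neg linorder_neqE_linordered_idom)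
  then have pos: "n1 * n1 + n2 * n2 > 0" using q1 by linarith
  have a: "n1 * (y1 - z1) + n2 * (y2 - z2) = 0" using assms(2) by (simp add: algebra_simps)
  have b: "- n2 * (y1 - z1) + n1 * (y2 - z2) = 0" using assms(3) by (simp add: algebra_simps)
  have "(n1 * n1 + n2 * n2) * (y1 - z1) = n1 * (n1 * (y1 - z1) + n2 * (y2 - z2)) - n2 * (- n2 * (y1 - z1) + n1 * (y2 - z2))"
    by (simp add: algebra_simps)
  then have c: "(n1 * n1 + n2 * n2) * (y1 - z1) = 0" using a b by simp
  have "(n1 * n1 + n2 * n2) * (y2 - z2) = n2 * (n1 * (y1 - z1) + n2 * (y2 - z2)) + n1 * (- n2 * (y1 - z1) + n1 * (y2 - z2))"
    by (simp add: algebra_simps)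
  then have d: "(n1 * n1 + n2 * n2) * (y2 - z2) = 0" using a b by simp
  have "y1 - z1 = 0" using c pos by (metis mult_eq_0_iff less_irrefl)
  moreover have "y2 - z2 = 0" using d pos by (metis mult_eq_0_iff less_irrefl)
  ultimately show ?thesis by simp
qed

lemma AE_pick:
  assumes "AE s in lborel. s \<in> {0..1::real} \<longrightarrow> Q s"
  shows "\<exists>s\<in>{0..1}. Q s"
proof (rule ccontr)
  assume "\<not> (\<exists>s\<in>{0..1}. Q s)"
  then have "AE s in lborel. s \<notin> {0..1::real}" using assms by (auto elim: AE_mp)
  then have "{0..1::real} \<in> null_sets lborel" using AE_iff_null_sets[of "{0..1::real}" lborel] by simp
  then show False by (simp add: null_sets_def)
qed

lemma Se_le_E:
  fixes D :: "real measure"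
  assumes "0 \<le> t"
  shows "Se D t \<le> (\<integral>\<^sup>+ v. ennreal v \<partial>D)"
  unfolding Se_def by (rule nn_integral_mono) (use assms in \<open>auto intro: ennreal_leI\<close>)

lemma E_le_Se:
  fixes D :: "real measure"
  assumes "prob_space D" "sets D = sets borel" "0 \<le> t"
  shows "(\<integral>\<^sup>+ v. ennreal v \<partial>D) \<le> Se D t + ennreal t"
proof -
  interpret prob_space D by fact
  have mD: "measurable D borel = measurable borel borel" using assms(2) by (rule measurable_cong_sets) simp
  have "(\<integral>\<^sup>+ v. ennreal v \<partial>D) \<le> (\<integral>\<^sup>+ v. ennreal (if t \<le> v then v - t else 0) + ennreal t \<partial>D)"
  proof (rule nn_integral_mono)
    fix v :: real
    show "ennreal v \<le> ennreal (if t \<le> v then v - t else 0) + ennreal t"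
    proof (cases "t \<le> v")
      case True
      then show ?thesis using assms(3) by (simp add: ennreal_plus[symmetric])
    next
      case False
      then show ?thesis by (simp add: ennreal_leI)
    qed
  qed
  also have "\<dots> = Se D t + (\<integral>\<^sup>+ v. ennreal t \<partial>D)"
    unfolding Se_def by (rule nn_integral_add) (auto simp: mD)
  also have "(\<integral>\<^sup>+ v. ennreal t \<partial>D) = ennreal t" by (simp add: emeasure_space_1)
  finally show ?thesis .
qed

lemma rev_le_E:
  fixes D :: "real measure"
  assumes "prob_space D" "sets D = sets borel" "M' \<in> mechs D" "supp D \<subseteq> {0..}"
  shows "revenue D M' \<le> (\<integral>\<^sup>+ v. ennreal v \<partial>D)" "surplus D M' \<le> (\<integral>\<^sup>+ v. ennreal v \<partial>D)"
proof -
  obtain x p where M: "M' = (x, p)" by fastforce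
  note m = assms(3)[unfolded M mechs_def, simplified]
  have AE: "AE v in D. v \<in> supp D" by (rule ae_supp[OF assms(1,2)])
  have b: "p v \<le> v \<and> x v * v - p v \<le> v" if "v \<in> supp D" for v
  proof -
    have v0: "0 \<le> v" using that assms(4) by auto
    have "x v * v \<le> 1 * v" using m that v0 by (intro mult_right_mono) auto
    then show ?thesis using m that by auto
  qed
  show "revenue D M' \<le> (\<integral>\<^sup>+ v. ennreal v \<partial>D)"
    unfolding revenue_def M snd_conv
  proof (rule nn_integral_mono_AE)
    show "AE v in D. ennreal (p v) \<le> ennreal v"
      by (rule AE_from_supp[OF AE]) (use b in \<open>auto intro: ennreal_leI\<close>)
  qed
  show "surplus D M' \<le> (\<integral>\<^sup>+ v. ennreal v \<partial>D)"
    unfolding surplus_def M fst_conv snd_conv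
  proof (rule nn_integral_mono_AE)
    show "AE v in D. ennreal (x v * v - p v) \<le> ennreal v"
      by (rule AE_from_supp[OF AE]) (use b in \<open>auto intro: ennreal_leI\<close>)
  qed
qed

lemma sep_normal:
  fixes A :: "(real \<times> real) set" and Pi U :: real
  assumes cA: "convex A" and PA: "(Pi, U) \<in> A"
    and nd: "\<And>y. y \<in> A \<Longrightarrow> \<not> (fst y > Pi \<and> snd y > U)"
  shows "\<exists>n1 n2. 0 \<le> n1 \<and> 0 \<le> n2 \<and> (n1 \<noteq> 0 \<or> n2 \<noteq> 0) \<and>
     (\<forall>y\<in>A. n1 * fst y + n2 * snd y \<le> n1 * Pi + n2 * U)"
proof -
  define T where "T = {y :: real \<times> real. fst y > Pi \<and> snd y > U}"
  have cT: "convex T" unfolding T_def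
  proof (rule convexI)
    fix y z :: "real \<times> real" and u v :: real
    assume yz: "y \<in> {y. Pi < fst y \<and> U < snd y}" "z \<in> {y. Pi < fst y \<and> U < snd y}" and uv: "0 \<le> u" "0 \<le> v" "u + v = 1"
    have "u * fst y + v * fst z > u * Pi + v * Pi"
    proof (cases "u = 0")
      case True then show ?thesis using yz uv by auto
    next
      case False then have "u > 0" using uv by auto
      then have "u * fst y > u * Pi" using yz by auto
      moreover have "v * fst z \<ge> v * Pi" using yz uv by (intro mult_left_mono) auto
      ultimately show ?thesis by linarith
    qed
    moreover have "u * snd y + v * snd z > u * U + v * U"
    proof (cases "u = 0")
      case True then show ?thesis using yz uv by auto
    next
      case False then have "u > 0" using uv by auto
      then have "u * snd y > u * U" using yz by auto
      moreover have "v * snd z \<ge> v * U" using yz uv by (intro mult_left_mono) auto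
      ultimately show ?thesis by linarith
    qed
    ultimately show "u *\<^sub>R y + v *\<^sub>R z \<in> {y. Pi < fst y \<and> U < snd y}"
      using uv by (simp add: distrib_right[symmetric])
  qed
  have TA: "A \<inter> T = {}" using nd unfolding T_def by auto
  have "(Pi + 1, U + 1) \<in> T" unfolding T_def by simp
  then have Tne: "T \<noteq> {}" by blast
  have Ane: "A \<noteq> {}" using PA by auto
  obtain a b where ab: "a \<noteq> 0" "\<forall>y\<in>A. inner a y \<le> b" "\<forall>y\<in>T. inner a y \<ge> b"
    using separating_hyperplane_sets[OF cA cT Ane Tne TA] by blast
  obtain n1 n2 where a: "a = (n1, n2)" by fastforce
  have inn: "inner a y = n1 * fst y + n2 * snd y" for y
    unfolding a by (cases y) simp
  define nP where "nP = n1 * Pi + n2 * U"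
  have nPb: "nP \<le> b" using ab(2) PA unfolding inn nP_def by force
  have Tp: "n1 * (Pi + e) + n2 * (U + f) \<ge> b" if "e > 0" "f > 0" for e f
    using ab(3) that unfolding T_def inn by force
  have n1: "n1 \<ge> 0"
  proof (rule ccontr)
    assume "\<not> n1 \<ge> 0"
    then have neg: "n1 < 0" by simp
    define e where "e = (\<bar>n2\<bar> + 1) / (- n1)"
    have e0: "e > 0" unfolding e_def by (rule divide_pos_pos) (use neg in auto)
    have ne: "n1 * e = - (\<bar>n2\<bar> + 1)" unfolding e_def using neg by simp
    have "n1 * (Pi + e) + n2 * (U + 1) \<ge> b" using Tp[OF e0] by simp
    then have "nP - (\<bar>n2\<bar> + 1) + n2 \<ge> b" unfolding nP_def using ne by (simp add: algebra_simps)
    then show False using nPb by (smt (verit))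
  qed
  have n2: "n2 \<ge> 0"
  proof (rule ccontr)
    assume "\<not> n2 \<ge> 0"
    then have neg: "n2 < 0" by simp
    define f where "f = (\<bar>n1\<bar> + 1) / (- n2)"
    have f0: "f > 0" unfolding f_def by (rule divide_pos_pos) (use neg in auto)
    have nf: "n2 * f = - (\<bar>n1\<bar> + 1)" unfolding f_def using neg by simp
    have "n1 * (Pi + 1) + n2 * (U + f) \<ge> b" using Tp[OF _ f0] by simp
    then have "nP - (\<bar>n1\<bar> + 1) + n1 \<ge> b" unfolding nP_def using nf by (simp add: algebra_simps)
    then show False using nPb by (smt (verit))
  qed
  have bnP: "b \<le> nP"
  proof (rule ccontr)
    assume "\<not> b \<le> nP"
    then have gt: "b - nP > 0" by simp
    define e where "e = (b - nP) / (n1 + n2 + 1)"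
    have e0: "e > 0" unfolding e_def using gt n1 n2 by simp
    have "(n1 + n2) * e < b - nP"
    proof -
      have "(n1 + n2) * e = (n1 + n2) / (n1 + n2 + 1) * (b - nP)" unfolding e_def by simp
      also have "\<dots> < 1 * (b - nP)" using gt n1 n2 by (intro mult_strict_right_mono) auto
      finally show ?thesis by simp
    qed
    moreover have "n1 * (Pi + e) + n2 * (U + e) \<ge> b" using Tp[OF e0 e0] .
    ultimately show False unfolding nP_def by (simp add: algebra_simps)
  qed
  have "a \<noteq> 0" by fact
  then have "n1 \<noteq> 0 \<or> n2 \<noteq> 0" unfolding a by (simp add: zero_prod_def)
  moreover have "\<forall>y\<in>A. n1 * fst y + n2 * snd y \<le> n1 * Pi + n2 * U"
    using ab(2) bnP unfolding inn nP_def by force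
  ultimately show ?thesis using n1 n2 by blast
qed

lemma int01:
  fixes f :: "real \<Rightarrow> real"
  assumes "f \<in> borel_measurable borel" "\<And>s. \<bar>f s\<bar> \<le> B"
  shows "integrable lborel (\<lambda>s. indicator {0..1} s * f s)"
proof (rule integrableI_bounded_set[where A = "{0..1}" and B = B])
  show "{0..1::real} \<in> sets lborel" by simp
  show "(\<lambda>s. indicator {0..1} s * f s) \<in> borel_measurable lborel" using assms(1) by measurable
  show "emeasure lborel {0..1::real} < \<infinity>" by simp
  show "AE x in lborel. x \<in> {0..1} \<longrightarrow> norm (indicator {0..1} x * f x) \<le> B"
    using assms(2) by (auto intro!: AE_I2)
  show "AE x in lborel. x \<notin> {0..1} \<longrightarrow> indicator {0..1} x * f x = 0" by (auto intro!: AE_I2)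
qed

lemma int01_const: "(\<integral>s. indicator {0..1::real} s * (c::real) \<partial>lborel) = c"
  using content_real[of "0::real" 1] by simp

lemma line_pick:
  fixes f1 f2 :: "real \<Rightarrow> real"
  assumes m1: "f1 \<in> borel_measurable borel" and m2: "f2 \<in> borel_measurable borel"
    and b1: "\<And>s. \<bar>f1 s\<bar> \<le> B1" and b2: "\<And>s. \<bar>f2 s\<bar> \<le> B2"
    and n: "0 \<le> n1" "0 \<le> n2" "n1 \<noteq> 0 \<or> n2 \<noteq> 0"
    and sup: "\<And>s. s \<in> {0..1} \<Longrightarrow> n1 * f1 s + n2 * f2 s \<le> n1 * Pv + n2 * U"
    and le1: "Pv \<le> I1" and le2: "U \<le> I2"
    and I1: "I1 = (\<integral>s. indicator {0..1} s * f1 s \<partial>lborel)"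
    and I2: "I2 = (\<integral>s. indicator {0..1} s * f2 s \<partial>lborel)"
  shows "\<exists>sa\<in>{0..1}. \<exists>sb\<in>{0..1}. \<exists>lam. 0 \<le> lam \<and> lam \<le> 1 \<and>
     lam * f1 sa + (1 - lam) * f1 sb = I1 \<and> lam * f2 sa + (1 - lam) * f2 sb = I2"
proof -
  define ind where "ind s = (indicator {0..1::real} s :: real)" for s :: real
  define nP where "nP = n1 * Pv + n2 * U"
  have i1: "integrable lborel (\<lambda>s. ind s * f1 s)" unfolding ind_def by (rule int01[OF m1 b1])
  have i2: "integrable lborel (\<lambda>s. ind s * f2 s)" unfolding ind_def by (rule int01[OF m2 b2])
  have ic: "integrable lborel (\<lambda>s. ind s * c)" for c :: real
    unfolding ind_def by (rule int01[of "\<lambda>_. c" "\<bar>c\<bar>"]) auto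
  have Ic: "(\<integral>s. ind s * c \<partial>lborel) = c" for c unfolding ind_def by (rule int01_const)
  define k where "k s = ind s * nP - n1 * (ind s * f1 s) - n2 * (ind s * f2 s)" for s
  have ik: "integrable lborel k" unfolding k_def using i1 i2 ic by auto
  have Ik: "integral\<^sup>L lborel k = nP - n1 * I1 - n2 * I2"
    unfolding k_def I1 I2 ind_def using i1 i2 ic unfolding ind_def
    by (simp add: int01_const)
  have k0: "0 \<le> k s" for s
  proof (cases "s \<in> {0..1}")
    case True
    then show ?thesis using sup[OF True] unfolding k_def ind_def nP_def by simp
  next
    case False then show ?thesis unfolding k_def ind_def by simp
  qed
  have "n1 * Pv \<le> n1 * I1" using le1 n(1) by (rule mult_left_mono)
  moreover have "n2 * U \<le> n2 * I2" using le2 n(2) by (rule mult_left_mono)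
  ultimately have "integral\<^sup>L lborel k \<le> 0" unfolding Ik nP_def by linarith
  moreover have "integral\<^sup>L lborel k \<ge> 0" using k0 by (simp add: integral_nonneg)
  ultimately have Ik0: "integral\<^sup>L lborel k = 0" by simp
  then have nQ: "n1 * I1 + n2 * I2 = nP" unfolding Ik by simp
  have AEk: "AE s in lborel. k s = 0"
    using integral_nonneg_eq_0_iff_AE[OF ik] Ik0 k0 by auto
  define gQ where "gQ = - n2 * I1 + n1 * I2"
  define j where "j s = - n2 * (ind s * f1 s) + n1 * (ind s * f2 s) - ind s * gQ" for s
  have ij: "integrable lborel j" unfolding j_def using i1 i2 ic by auto
  have I1': "integral\<^sup>L lborel (\<lambda>s. ind s * f1 s) = I1" unfolding I1 ind_def ..
  have I2': "integral\<^sup>L lborel (\<lambda>s. ind s * f2 s) = I2" unfolding I2 ind_def ..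
  have Ij: "integral\<^sup>L lborel j = 0"
  proof -
    have "integral\<^sup>L lborel j = - n2 * integral\<^sup>L lborel (\<lambda>s. ind s * f1 s) + n1 * integral\<^sup>L lborel (\<lambda>s. ind s * f2 s) - integral\<^sup>L lborel (\<lambda>s. ind s * gQ)"
      unfolding j_def using i1 i2 ic by simp
    then show ?thesis unfolding I1' I2' Ic gQ_def by simp
  qed
  have kz: "n1 * f1 s + n2 * f2 s = nP" if "s \<in> {0..1}" "k s = 0" for s
    using that unfolding k_def ind_def by simp
  have jv: "j s = - n2 * f1 s + n1 * f2 s - gQ" if "s \<in> {0..1}" for s
    using that unfolding j_def ind_def by simp
  have pickA: "\<exists>s\<in>{0..1}. k s = 0 \<and> j s \<le> 0"
  proof (rule ccontr)
    assume H: "\<not> (\<exists>s\<in>{0..1}. k s = 0 \<and> j s \<le> 0)"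
    have "AE s in lborel. 0 \<le> j s"
      using AEk
    proof (rule AE_mp)
      show "AE s in lborel. k s = 0 \<longrightarrow> 0 \<le> j s"
      proof (rule AE_I2, rule impI)
        fix s assume "k s = 0"
        then show "0 \<le> j s" using H by (cases "s \<in> {0..1}") (auto simp: j_def ind_def)
      qed
    qed
    then have "AE s in lborel. j s = 0" using integral_nonneg_eq_0_iff_AE[OF ij] Ij by simp
    with AEk have "AE s in lborel. s \<in> {0..1} \<longrightarrow> (k s = 0 \<and> j s \<le> 0)" by eventually_elim auto
    then have "\<exists>s\<in>{0..1}. k s = 0 \<and> j s \<le> 0" by (rule AE_pick)
    with H show False by blast
  qed
  have pickB: "\<exists>s\<in>{0..1}. k s = 0 \<and> j s \<ge> 0"
  proof (rule ccontr)
    assume H: "\<not> (\<exists>s\<in>{0..1}. k s = 0 \<and> j s \<ge> 0)"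
    have ij': "integrable lborel (\<lambda>s. - j s)" using ij by simp
    have "AE s in lborel. 0 \<le> - j s"
      using AEk
    proof (rule AE_mp)
      show "AE s in lborel. k s = 0 \<longrightarrow> 0 \<le> - j s"
      proof (rule AE_I2, rule impI)
        fix s assume "k s = 0"
        then show "0 \<le> - j s" using H by (cases "s \<in> {0..1}") (auto simp: j_def ind_def)
      qed
    qed
    then have "AE s in lborel. - j s = 0" using integral_nonneg_eq_0_iff_AE[OF ij'] Ij by simp
    with AEk have "AE s in lborel. s \<in> {0..1} \<longrightarrow> (k s = 0 \<and> j s \<ge> 0)" by eventually_elim auto
    then have "\<exists>s\<in>{0..1}. k s = 0 \<and> j s \<ge> 0" by (rule AE_pick)
    with H show False by blast
  qed
  obtain sa where sa: "sa \<in> {0..1}" "k sa = 0" "j sa \<le> 0" using pickA by blast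
  obtain sb where sb: "sb \<in> {0..1}" "k sb = 0" "j sb \<ge> 0" using pickB by blast
  define gA where "gA = - n2 * f1 sa + n1 * f2 sa"
  define gB where "gB = - n2 * f1 sb + n1 * f2 sb"
  have gAQ: "gA \<le> gQ" using sa jv[OF sa(1)] unfolding gA_def by simp
  have gBQ: "gQ \<le> gB" using sb jv[OF sb(1)] unfolding gB_def by simp
  have nA: "n1 * f1 sa + n2 * f2 sa = nP" using kz[OF sa(1,2)] .
  have nB: "n1 * f1 sb + n2 * f2 sb = nP" using kz[OF sb(1,2)] .
  define lam where "lam = (if gB = gA then 1 else (gB - gQ) / (gB - gA))"
  have lam01: "0 \<le> lam \<and> lam \<le> 1"
  proof (cases "gB = gA")
    case True then show ?thesis unfolding lam_def by simp
  next
    case False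
    then have "gB - gA > 0" using gAQ gBQ by simp
    then show ?thesis unfolding lam_def using False gAQ gBQ by (simp add: divide_le_eq)
  qed
  have glam: "lam * gA + (1 - lam) * gB = gQ"
  proof (cases "gB = gA")
    case True then show ?thesis unfolding lam_def using gAQ gBQ by simp
  next
    case False
    then have nz: "gB - gA \<noteq> 0" by simp
    have "lam * (gB - gA) = gB - gQ" unfolding lam_def using False nz by simp
    moreover have "lam * gA + (1 - lam) * gB = gB - lam * (gB - gA)" by (simp add: algebra_simps)
    ultimately show ?thesis by simp
  qed
  define y1 where "y1 = lam * f1 sa + (1 - lam) * f1 sb"
  define y2 where "y2 = lam * f2 sa + (1 - lam) * f2 sb"
  have e1: "n1 * y1 + n2 * y2 = n1 * I1 + n2 * I2"
  proof -
    have "n1 * y1 + n2 * y2 = lam * (n1 * f1 sa + n2 * f2 sa) + (1 - lam) * (n1 * f1 sb + n2 * f2 sb)"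
      unfolding y1_def y2_def by (simp add: algebra_simps)
    also have "\<dots> = nP" unfolding nA nB by (simp add: algebra_simps)
    finally show ?thesis using nQ by simp
  qed
  have e2: "- n2 * y1 + n1 * y2 = - n2 * I1 + n1 * I2"
  proof -
    have "- n2 * y1 + n1 * y2 = lam * gA + (1 - lam) * gB"
      unfolding y1_def y2_def gA_def gB_def by (simp add: algebra_simps)
    then show ?thesis using glam unfolding gQ_def by simp
  qed
  have "y1 = I1 \<and> y2 = I2" using two_d[OF n(3) e1 e2] .
  then show ?thesis using sa(1) sb(1) lam01 unfolding y1_def y2_def by blast
qed

lemma ennreal_lin2:
  assumes "0 \<le> u" "u \<le> 1" "0 \<le> a" "0 \<le> b"
  shows "ennreal u * ennreal a + ennreal (1 - u) * ennreal b = ennreal (u * a + (1 - u) * b)"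
  using assms by (simp add: ennreal_mult[symmetric] ennreal_plus)

theorem proposition3p1:
  fixes D :: "real measure" and M :: mech
  assumes "standing_assumptions D"
    and "pareto_optimal D M"
  shows "\<exists>lam p1 p2. 0 \<le> lam \<and> lam \<le> 1 \<and>
           0 \<le> p1 \<and> p1 \<le> lowest_monopoly_reserve D \<and>
           0 \<le> p2 \<and> p2 \<le> lowest_monopoly_reserve D \<and>
           lottery_pricing lam p1 p2 \<in> mechs D \<and>
           revenue D (lottery_pricing lam p1 p2) = revenue D M \<and>
           surplus D (lottery_pricing lam p1 p2) = surplus D M"
proof -
  note SA = assms(1) and PO = assms(2)
  have P: "prob_space D" and sD: "sets D = sets borel" using SA unfolding standing_assumptions_def by auto
  interpret prob_space D by (rule P)
  obtain vL where vL: "0 \<le> vL" "vL \<in> supp D" "supp D \<subseteq> {vL..}"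
     "\<And>v. v \<in> supp D \<Longrightarrow> {vL..v} \<subseteq> supp D" "closed (supp D)"
    using sa_supp[OF SA] by blast
  define r where "r = lowest_monopoly_reserve D"
  have RM: "0 \<le> r \<and> (\<forall>t. Rr D t \<le> Rr D r)" using reserve_max[OF SA] unfolding r_def Rr_def by blast
  have r0: "0 \<le> r" using RM by blast
  have rmax: "\<And>t. Rr D t \<le> Rr D r" using RM by blast
  have Mm: "M \<in> mechs D" using PO unfolding pareto_optimal_def by simp
  obtain x p where Mxp: "M = (x, p)" by fastforce
  have Mm': "(x, p) \<in> mechs D" using Mm Mxp by simp
  note ctx = P sD refl vL(1) vL(2) vL(3) vL(4) vL(5) Mm'
  define \<phi> where "\<phi> s = min (pit x p vL (supp D) s) r" for s
  have [measurable]: "pit x p vL (supp D) \<in> borel_measurable borel" by (rule pit_meas[OF ctx])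
  have \<phi>m: "\<phi> \<in> borel_measurable borel" unfolding \<phi>_def by measurable
  have \<phi>01: "0 \<le> \<phi> s \<and> \<phi> s \<le> r" for s using pit_nonneg[OF ctx, of s] r0 by (simp add: \<phi>_def)
  have decR: "revenue D M \<le> (\<integral>\<^sup>+ s. ennreal (indicator {0..1} s * Rr D (\<phi> s)) \<partial>lborel)"
    using decomp(1)[OF ctx r0 rmax] unfolding Mxp \<phi>_def .
  have decS: "surplus D M \<le> (\<integral>\<^sup>+ s. ennreal (indicator {0..1} s) * Se D (\<phi> s) \<partial>lborel)"
    using decomp(2)[OF ctx r0 rmax] unfolding Mxp \<phi>_def .
  have S0: "supp D \<subseteq> {0..}" using vL by auto
  have RR0: "0 \<le> Rr D t" if "0 \<le> t" for t using that by (simp add: Rr_def)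
  have post_m: "lottery_pricing 1 t t \<in> mechs D" if "0 \<le> t" for t
    using lottery_in_mechs[of 1 t t D] that by simp
  have post_r: "revenue D (lottery_pricing 1 t t) = ennreal (Rr D t)" if "0 \<le> t" for t
    using lottery_revenue[OF P sD, of 1 t t] that by simp
  have post_s: "surplus D (lottery_pricing 1 t t) = Se D t" if "0 \<le> t" for t
    using lottery_surplus[OF P sD, of 1 t t] that by simp
  define E where "E = (\<integral>\<^sup>+ v. ennreal v \<partial>D)"
  show ?thesis
  proof (cases "E = \<infinity>")
    case True
    have "E \<le> Se D r + ennreal r" unfolding E_def by (rule E_le_Se[OF P sD r0])
    then have "Se D r + ennreal r = \<infinity>" using True by (simp add: top_unique)
    then have Ser: "Se D r = \<infinity>" by (simp add: ennreal_add_eq_top)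
    have "revenue D M \<le> (\<integral>\<^sup>+ s. ennreal (Rr D r) * indicator {0..1::real} s \<partial>lborel)"
    proof -
      have "(\<integral>\<^sup>+ s. ennreal (indicator {0..1} s * Rr D (\<phi> s)) \<partial>lborel) \<le>
            (\<integral>\<^sup>+ s. ennreal (Rr D r) * indicator {0..1::real} s \<partial>lborel)"
      proof (rule nn_integral_mono)
        fix s :: real
        show "ennreal (indicator {0..1} s * Rr D (\<phi> s)) \<le> ennreal (Rr D r) * indicator {0..1::real} s"
          using rmax[of "\<phi> s"] by (cases "s \<in> {0..1}") (auto intro: ennreal_leI)
      qed
      then show ?thesis using decR by (rule order_trans[rotated])
    qed
    also have "\<dots> = ennreal (Rr D r)" by (simp add: nn_integral_cmult_indicator)
    finally have Rle: "revenue D M \<le> revenue D (lottery_pricing 1 r r)" using post_r[OF r0] by simp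
    have Sle: "surplus D M \<le> surplus D (lottery_pricing 1 r r)" using post_s[OF r0] Ser by simp
    have "revenue D (lottery_pricing 1 r r) = revenue D M \<and> surplus D (lottery_pricing 1 r r) = surplus D M"
      by (rule po_eq[OF PO post_m[OF r0] Rle Sle])
    then have "0 \<le> (1::real) \<and> (1::real) \<le> 1 \<and> 0 \<le> r \<and> r \<le> r \<and> 0 \<le> r \<and> r \<le> r \<and>
           lottery_pricing 1 r r \<in> mechs D \<and>
           revenue D (lottery_pricing 1 r r) = revenue D M \<and>
           surplus D (lottery_pricing 1 r r) = surplus D M" using r0 post_m[OF r0] by auto
    then show ?thesis unfolding r_def by blast
  next
    case False
    then have Efin: "E < \<infinity>" by (simp add: top.not_eq_extremum)
    define EB where "EB = enn2real E"
    have EEB: "E = ennreal EB" unfolding EB_def using Efin by simp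
    define Sr where "Sr t = enn2real (Se D t)" for t
    have SeE: "Se D t \<le> E" if "0 \<le> t" for t unfolding E_def by (rule Se_le_E[OF that])
    have Se_eq: "Se D t = ennreal (Sr t)" if "0 \<le> t" for t
    proof -
      have "Se D t < \<infinity>" using le_less_trans[OF SeE[OF that] Efin] .
      then show ?thesis unfolding Sr_def by simp
    qed
    have Sr_b: "0 \<le> Sr t \<and> Sr t \<le> EB" if "0 \<le> t" for t
    proof -
      have "ennreal (Sr t) \<le> ennreal EB" using SeE[OF that] Se_eq[OF that] EEB by simp
      moreover have "0 \<le> EB" unfolding EB_def by simp
      ultimately show ?thesis unfolding Sr_def by (simp add: ennreal_le_iff)
    qed
    define rv where "rv M' = enn2real (revenue D M')" for M'
    define sv where "sv M' = enn2real (surplus D M')" for M'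
    have rv_eq: "revenue D M' = ennreal (rv M')" if "M' \<in> mechs D" for M'
    proof -
      have "revenue D M' < \<infinity>" using le_less_trans[OF rev_le_E(1)[OF P sD that S0] Efin[unfolded E_def]] .
      then show ?thesis unfolding rv_def by simp
    qed
    have sv_eq: "surplus D M' = ennreal (sv M')" if "M' \<in> mechs D" for M'
    proof -
      have "surplus D M' < \<infinity>" using le_less_trans[OF rev_le_E(2)[OF P sD that S0] Efin[unfolded E_def]] .
      then show ?thesis unfolding sv_def by simp
    qed
    have rv0: "0 \<le> rv M'" for M' unfolding rv_def by simp
    have sv0: "0 \<le> sv M'" for M' unfolding sv_def by simp
    define A where "A = (\<lambda>M'. (rv M', sv M')) ` mechs D"
    have cA: "convex A"
    proof (rule convexI)
      fix y z :: "real \<times> real" and u v :: real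
      assume yz: "y \<in> A" "z \<in> A" and uv: "0 \<le> u" "0 \<le> v" "u + v = 1"
      obtain M1 where M1: "M1 \<in> mechs D" "y = (rv M1, sv M1)" using yz(1) unfolding A_def by blast
      obtain M2 where M2: "M2 \<in> mechs D" "z = (rv M2, sv M2)" using yz(2) unfolding A_def by blast
      have u1: "u \<le> 1" and v1: "v = 1 - u" using uv by auto
      have Mm: "mix u M1 M2 \<in> mechs D" by (rule mix_in_mechs[OF M1(1) M2(1) uv(1) u1])
      have qr: "revenue D (mix u M1 M2) = ennreal (u * rv M1 + (1 - u) * rv M2)"
        using mix_rev_sur(1)[OF P sD M1(1) M2(1) uv(1) u1] rv_eq[OF M1(1)] rv_eq[OF M2(1)]
          ennreal_lin2[OF uv(1) u1 rv0 rv0] by simp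
      have Qr: "0 \<le> u * rv M1 + (1 - u) * rv M2" using uv u1 rv0 by simp
      have r: "rv (mix u M1 M2) = u * rv M1 + (1 - u) * rv M2"
        unfolding rv_def[of "mix u M1 M2"] qr by (rule enn2real_ennreal[OF Qr])
      have qs: "surplus D (mix u M1 M2) = ennreal (u * sv M1 + (1 - u) * sv M2)"
        using mix_rev_sur(2)[OF P sD M1(1) M2(1) uv(1) u1] sv_eq[OF M1(1)] sv_eq[OF M2(1)]
          ennreal_lin2[OF uv(1) u1 sv0 sv0] by simp
      have Qs: "0 \<le> u * sv M1 + (1 - u) * sv M2" using uv u1 sv0 by simp
      have s: "sv (mix u M1 M2) = u * sv M1 + (1 - u) * sv M2"
        unfolding sv_def[of "mix u M1 M2"] qs by (rule enn2real_ennreal[OF Qs])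
      have "u *\<^sub>R y + v *\<^sub>R z = (rv (mix u M1 M2), sv (mix u M1 M2))"
        unfolding M1(2) M2(2) r s v1 by simp
      then show "u *\<^sub>R y + v *\<^sub>R z \<in> A" unfolding A_def using Mm by blast
    qed
    define Pv where "Pv = rv M"
    define U where "U = sv M"
    have PA: "(Pv, U) \<in> A" unfolding A_def Pv_def U_def using Mm by blast
    have nd: "\<not> (fst y > Pv \<and> snd y > U)" if yA: "y \<in> A" for y
    proof
      assume H: "fst y > Pv \<and> snd y > U"
      obtain M' where M': "M' \<in> mechs D" "y = (rv M', sv M')" using yA unfolding A_def by blast
      have "revenue D M' > revenue D M" using H rv_eq[OF M'(1)] rv_eq[OF Mm] M' rv0 unfolding Pv_def
        by (simp add: ennreal_less_iff)
      moreover have "surplus D M' > surplus D M" using H sv_eq[OF M'(1)] sv_eq[OF Mm] M' sv0 unfolding U_def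
        by (simp add: ennreal_less_iff)
      ultimately have "pareto_dominated D M M'" unfolding pareto_dominated_def by (simp add: less_imp_le)
      then show False using PO M'(1) unfolding pareto_optimal_def by blast
    qed
    obtain n1 n2 where n: "0 \<le> n1" "0 \<le> n2" "n1 \<noteq> 0 \<or> n2 \<noteq> 0"
      and nA: "\<forall>y\<in>A. n1 * fst y + n2 * snd y \<le> n1 * Pv + n2 * U"
      using sep_normal[OF cA PA nd] by blast
    have post_rv: "rv (lottery_pricing 1 t t) = Rr D t" if "0 \<le> t" for t
      unfolding rv_def post_r[OF that] using RR0[OF that] by simp
    have post_sv: "sv (lottery_pricing 1 t t) = Sr t" if "0 \<le> t" for t
      unfolding sv_def post_s[OF that] Sr_def ..
    define f1 where "f1 s = Rr D (\<phi> s)" for s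
    define f2 where "f2 s = Sr (\<phi> s)" for s
    have sup: "n1 * f1 s + n2 * f2 s \<le> n1 * Pv + n2 * U" for s
    proof -
      have t0: "0 \<le> \<phi> s" using \<phi>01 by blast
      have "(rv (lottery_pricing 1 (\<phi> s) (\<phi> s)), sv (lottery_pricing 1 (\<phi> s) (\<phi> s))) \<in> A"
        unfolding A_def using post_m[OF t0] by blast
      then show ?thesis using nA post_rv[OF t0] post_sv[OF t0] unfolding f1_def f2_def by force
    qed
    have Gm: "(\<lambda>t. measure D {t..}) \<in> borel_measurable borel"
    proof -
      have "mono (\<lambda>t. - measure D {t..})"
        by (rule monoI) (simp add: G_antimono[OF P sD])
      then have "(\<lambda>t. - measure D {t..}) \<in> borel_measurable borel" by (rule borel_measurable_mono)
      then have "(\<lambda>t. - (- measure D {t..})) \<in> borel_measurable borel" by measurable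
      then show ?thesis by simp
    qed
    have f1m: "f1 \<in> borel_measurable borel"
    proof -
      have "(\<lambda>s. \<phi> s * measure D {\<phi> s..}) \<in> borel_measurable borel"
        using measurable_compose[OF \<phi>m Gm] \<phi>m by measurable
      then show ?thesis unfolding f1_def Rr_def .
    qed
    have Srm: "(\<lambda>t. Sr (max t 0)) \<in> borel_measurable borel"
    proof -
      have "mono (\<lambda>t. - Sr (max t 0))"
      proof (rule monoI)
        fix t t' :: real assume tt: "t \<le> t'"
        have "Se D (max t' 0) \<le> Se D (max t 0)"
          unfolding Se_def by (rule nn_integral_mono) (use tt in \<open>auto intro: ennreal_leI\<close>)
        then have "Sr (max t' 0) \<le> Sr (max t 0)"
          using Se_eq[of "max t 0"] Se_eq[of "max t' 0"] Sr_b[of "max t 0"] by simp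
        then show "- Sr (max t 0) \<le> - Sr (max t' 0)" by simp
      qed
      then have "(\<lambda>t. - Sr (max t 0)) \<in> borel_measurable borel" by (rule borel_measurable_mono)
      then have "(\<lambda>t. - (- Sr (max t 0))) \<in> borel_measurable borel" by measurable
      then show ?thesis by simp
    qed
    have f2m: "f2 \<in> borel_measurable borel"
    proof -
      have "f2 = (\<lambda>s. Sr (max (\<phi> s) 0))" unfolding f2_def
      proof (rule ext)
        fix s have "max (\<phi> s) 0 = \<phi> s" using \<phi>01[of s] by (simp add: max_absorb1)
        then show "Sr (\<phi> s) = Sr (max (\<phi> s) 0)" by simp
      qed
      then show ?thesis using measurable_compose[OF \<phi>m Srm] by simp
    qed
    have f1b: "\<bar>f1 s\<bar> \<le> Rr D r" for s unfolding f1_def using RR0[of "\<phi> s"] \<phi>01 rmax by auto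
    have f2b: "\<bar>f2 s\<bar> \<le> EB" for s unfolding f2_def using Sr_b[of "\<phi> s"] \<phi>01 by auto
    define I1 where "I1 = (\<integral>s. indicator {0..1} s * f1 s \<partial>lborel)"
    define I2 where "I2 = (\<integral>s. indicator {0..1} s * f2 s \<partial>lborel)"
    have nn1: "0 \<le> indicator {0..1} s * f1 s" for s :: real
      unfolding f1_def using RR0 \<phi>01 by simp
    have nn2: "0 \<le> indicator {0..1} s * f2 s" for s :: real
      unfolding f2_def using Sr_b \<phi>01 by simp
    have eI1: "(\<integral>\<^sup>+ s. ennreal (indicator {0..1} s * f1 s) \<partial>lborel) = ennreal I1"
      unfolding I1_def by (rule nn_integral_eq_integral[OF int01[OF f1m f1b]]) (simp add: nn1)
    have eI2: "(\<integral>\<^sup>+ s. ennreal (indicator {0..1} s * f2 s) \<partial>lborel) = ennreal I2"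
      unfolding I2_def by (rule nn_integral_eq_integral[OF int01[OF f2m f2b]]) (simp add: nn2)
    have I10: "0 \<le> I1" unfolding I1_def using nn1 by (simp add: integral_nonneg)
    have I20: "0 \<le> I2" unfolding I2_def using nn2 by (simp add: integral_nonneg)
    have le1: "Pv \<le> I1"
    proof -
      have "ennreal Pv \<le> ennreal I1" using decR rv_eq[OF Mm] eI1 unfolding Pv_def f1_def by simp
      then show ?thesis using I10 by (simp add: ennreal_le_iff)
    qed
    have le2: "U \<le> I2"
    proof -
      have "(\<integral>\<^sup>+ s. ennreal (indicator {0..1} s) * Se D (\<phi> s) \<partial>lborel) =
            (\<integral>\<^sup>+ s. ennreal (indicator {0..1} s * f2 s) \<partial>lborel)"
      proof (rule nn_integral_cong)
        fix s :: real
        show "ennreal (indicator {0..1} s) * Se D (\<phi> s) = ennreal (indicator {0..1} s * f2 s)"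
          unfolding f2_def using Se_eq[of "\<phi> s"] \<phi>01 Sr_b[of "\<phi> s"] by (simp add: ennreal_mult)
      qed
      then have "ennreal U \<le> ennreal I2" using decS sv_eq[OF Mm] eI2 unfolding U_def by simp
      then show ?thesis using I20 by (simp add: ennreal_le_iff)
    qed
    obtain sa sb lam where pk: "sa \<in> {0..1}" "sb \<in> {0..1}" "0 \<le> lam" "lam \<le> 1"
      "lam * f1 sa + (1 - lam) * f1 sb = I1" "lam * f2 sa + (1 - lam) * f2 sb = I2"
      using line_pick[OF f1m f2m f1b f2b n sup le1 le2 I1_def I2_def] by blast
    define L where "L = lottery_pricing lam (\<phi> sa) (\<phi> sb)"
    have a0: "0 \<le> \<phi> sa" "0 \<le> \<phi> sb" using \<phi>01 by auto
    have Lm: "L \<in> mechs D" unfolding L_def by (rule lottery_in_mechs[OF pk(3,4) a0])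
    have Lr: "revenue D L = ennreal I1"
      unfolding L_def lottery_revenue[OF P sD pk(3,4) a0] using pk(5) unfolding f1_def by simp
    have Ls: "surplus D L = ennreal I2"
    proof -
      have "surplus D L = ennreal lam * ennreal (f2 sa) + ennreal (1 - lam) * ennreal (f2 sb)"
        unfolding L_def lottery_surplus[OF P sD pk(3,4) a0] f2_def using Se_eq a0 by simp
      also have "\<dots> = ennreal (lam * f2 sa + (1 - lam) * f2 sb)"
        by (rule ennreal_lin2[OF pk(3,4)]) (use a0 Sr_b in \<open>auto simp: f2_def\<close>)
      finally show ?thesis using pk(6) by simp
    qed
    have Rle: "revenue D M \<le> revenue D L" using rv_eq[OF Mm] Lr le1 unfolding Pv_def by (simp add: ennreal_leI)
    have Sle: "surplus D M \<le> surplus D L" using sv_eq[OF Mm] Ls le2 unfolding U_def by (simp add: ennreal_leI)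
    have "revenue D L = revenue D M \<and> surplus D L = surplus D M" by (rule po_eq[OF PO Lm Rle Sle])
    then have "0 \<le> lam \<and> lam \<le> 1 \<and> 0 \<le> \<phi> sa \<and> \<phi> sa \<le> r \<and> 0 \<le> \<phi> sb \<and> \<phi> sb \<le> r \<and>
           lottery_pricing lam (\<phi> sa) (\<phi> sb) \<in> mechs D \<and>
           revenue D (lottery_pricing lam (\<phi> sa) (\<phi> sb)) = revenue D M \<and>
           surplus D (lottery_pricing lam (\<phi> sa) (\<phi> sb)) = surplus D M"
      using pk(3,4) a0 \<phi>01 Lm unfolding L_def by auto
    then show ?thesis unfolding r_def by blast
  qed
qed

end
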